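(* Let $K$ be a field, $Q$ the bipartite type $A$ quiver with vertices $y_0,x_1,\dots,x_n,y_n$ and arrows $\alpha_i\colon x_i\to y_{i-1}$, $\beta_i\colon x_i\to y_i$, $\mathbf{d}$ a dimension vector, $\mathbf{r}$ a quiver rank array, and $\mathbf{b}(\mathbf{r})$ its block rank matrix. Then there exists a unique $d\times d$ permutation matrix $v(\mathbf{r})$ such that (1) for all $1\le i,j\le 2n+1$ the number of $1$s in block $(i,j)$ of $v(\mathbf{r})$ equals $\mathbf{b}(\mathbf{r})_{i,j}+\mathbf{b}(\mathbf{r})_{i-1,j-1}-\mathbf{b}(\mathbf{r})_{i,j-1}-\mathbf{b}(\mathbf{r})_{i-1,j}$, where $\mathbf{b}(\mathbf{r})_{i,j}=0$ if $i$ or $j$ lies outside $[1,2n+1]$; (2) the $1$s are arranged from northwest to southeast across each block row; (3) the $1$s are arranged from northwest to southeast down each block column.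
   Context: $\mathrm{rep}_Q(\mathbf{d})$: tuples $V=(V_a)$, $V_a\in\mathrm{Mat}_{\mathbf{d}(ha)\times\mathbf{d}(ta)}(K)$. $M_Q(V)$: block matrix with block rows $y_0,\dots,y_n$ and block columns $x_n,\dots,x_1$, with $V_{\alpha_i}$ in block $(y_{i-1},x_i)$, $V_{\beta_i}$ in block $(y_i,x_i)$, zeros elsewhere; for an interval $J$ (nonempty set of consecutive vertices), $M_J(V)$ is its submatrix on block rows of $y$-vertices of $J$ and block columns of $x$-vertices of $J$. A quiver rank array $\mathbf{r}$ is a function on intervals of the form $J\mapsto\operatorname{rank}M_J(V)$ for some $V$; $\mathcal{O}_\mathbf{r}$ the set of such $V$. $d_x=\sum\mathbf{d}(x_i)$, $d_y=\sum\mathbf{d}(y_i)$, $d=d_x+d_y$, $\zeta(V)=\begin{pmatrix}M_Q(V)&\mathbf{1}_{d_y}\\ \mathbf{1}_{d_x}&0\end{pmatrix}$. $d\times d$ matrices are divided into row blocks of sizes $\mathbf{d}(y_0),\dots,\mathbf{d}(y_n),\mathbf{d}(x_n),\dots,\mathbf{d}(x_1)$ and column blocks of sizes $\mathbf{d}(x_n),\dots,\mathbf{d}(x_1),\mathbf{d}(y_0),\dots,\mathbf{d}(y_n)$, numbered $1..2n+1$; $Z_{i\times j}$ is the submatrix of block rows $1..i$ and block columns $1..j$; $\mathbf{b}(\mathbf{r})_{i,j}=\operatorname{rank}\zeta(V)_{i\times j}$ for $V\in\mathcal{O}_\mathbf{r}$. "Northwest to southeast across a block row" means: of any two $1$s in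 the same block row, the one in the higher row lies in the column further left (similarly for block columns). *)

theory Defs
  imports "Jordan_Normal_Form.DL_Rank" "Jordan_Normal_Form.DL_Submatrix"
begin

definition mrank :: "'a::field mat \<Rightarrow> nat" where
  "mrank A = vec_space.rank (dim_row A) A"

(* A dimension vector is given by dy (i = 0..n)
   and dx (i = 1..n). *)

definition rep_Q :: "nat \<Rightarrow> (nat \<Rightarrow> nat) \<Rightarrow> (nat \<Rightarrow> nat) \<Rightarrow>
    ((nat \<Rightarrow> 'a::field mat) \<times> (nat \<Rightarrow> 'a mat)) set" where
  "rep_Q n dx dy = {(al, be). \<forall>i\<in>{1..n}.
      al i \<in> carrier_mat (dy (i - 1)) (dx i) \<and> be i \<in> carrier_mat (dy i) (dx i)}"

definition dX :: "nat \<Rightarrow> (nat \<Rightarrow> nat) \<Rightarrow> nat" where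
  "dX n dx = (\<Sum>i\<in>{1..n}. dx i)"
definition dY :: "nat \<Rightarrow> (nat \<Rightarrow> nat) \<Rightarrow> nat" where
  "dY n dy = (\<Sum>i\<in>{0..n}. dy i)"

(* Offset of block row y_i in M_Q (block rows ordered y_0,...,y_n) *)
definition yoff :: "(nat \<Rightarrow> nat) \<Rightarrow> nat \<Rightarrow> nat" where
  "yoff dy i = (\<Sum>k<i. dy k)"
(* Offset of block column x_i in M_Q (block columns ordered x_n,...,x_1) *)
definition xoff :: "nat \<Rightarrow> (nat \<Rightarrow> nat) \<Rightarrow> nat \<Rightarrow> nat" where
  "xoff n dx i = (\<Sum>k\<in>{i+1..n}. dx k)"

definition yrows :: "(nat \<Rightarrow> nat) \<Rightarrow> nat \<Rightarrow> nat set" where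
  "yrows dy i = {yoff dy i ..< yoff dy i + dy i}"
definition xcols :: "nat \<Rightarrow> (nat \<Rightarrow> nat) \<Rightarrow> nat \<Rightarrow> nat set" where
  "xcols n dx i = {xoff n dx i ..< xoff n dx i + dx i}"

definition M_Q :: "nat \<Rightarrow> (nat \<Rightarrow> nat) \<Rightarrow> (nat \<Rightarrow> nat) \<Rightarrow>
    (nat \<Rightarrow> 'a::field mat) \<times> (nat \<Rightarrow> 'a mat) \<Rightarrow> 'a mat" where
  "M_Q n dx dy V = mat (dY n dy) (dX n dx) (\<lambda>(p, q).
     \<Sum>i\<in>{1..n}.
       (if q \<in> xcols n dx i \<and> p \<in> yrows dy (i - 1)
        then fst V i $$ (p - yoff dy (i - 1), q - xoff n dx i) else 0)
     + (if q \<in> xcols n dx i \<and> p \<in> yrows dy i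
        then snd V i $$ (p - yoff dy i, q - xoff n dx i) else 0))"

(* Vertices are numbered by their position 0..2n in the order
   y_0, x_1, y_1, ..., x_n, y_n: y_i has position 2i, x_i has position 2i-1.
   An interval J is {a..b} with a \<le> b \<le> 2n, encoded as the pair (a,b). *)
definition M_J :: "nat \<Rightarrow> (nat \<Rightarrow> nat) \<Rightarrow> (nat \<Rightarrow> nat) \<Rightarrow>
    (nat \<Rightarrow> 'a::field mat) \<times> (nat \<Rightarrow> 'a mat) \<Rightarrow> nat \<times> nat \<Rightarrow> 'a mat" where
  "M_J n dx dy V J = submatrix (M_Q n dx dy V)
     (\<Union>i\<in>{i. i \<le> n \<and> 2 * i \<in> {fst J..snd J}}. yrows dy i)
     (\<Union>i\<in>{i. 1 \<le> i \<and> i \<le> n \<and> 2 * i - 1 \<in> {fst J..snd J}}. xcols n dx i)"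

definition is_interval :: "nat \<Rightarrow> nat \<times> nat \<Rightarrow> bool" where
  "is_interval n J \<longleftrightarrow> fst J \<le> snd J \<and> snd J \<le> 2 * n"

definition orbit_r :: "nat \<Rightarrow> (nat \<Rightarrow> nat) \<Rightarrow> (nat \<Rightarrow> nat) \<Rightarrow> (nat \<times> nat \<Rightarrow> nat) \<Rightarrow>
    ((nat \<Rightarrow> 'a::field mat) \<times> (nat \<Rightarrow> 'a mat)) set" where
  "orbit_r n dx dy r = {V \<in> rep_Q n dx dy.
      \<forall>J. is_interval n J \<longrightarrow> r J = mrank (M_J n dx dy V J)}"

definition quiver_rank_array :: "'a::field itself \<Rightarrow> nat \<Rightarrow> (nat \<Rightarrow> nat) \<Rightarrow> (nat \<Rightarrow> nat) \<Rightarrow>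
    (nat \<times> nat \<Rightarrow> nat) \<Rightarrow> bool" where
  "quiver_rank_array TYPE('a) n dx dy r \<longleftrightarrow> (orbit_r n dx dy r :: (_ \<times> (nat \<Rightarrow> 'a mat)) set) \<noteq> {}"

definition zeta :: "nat \<Rightarrow> (nat \<Rightarrow> nat) \<Rightarrow> (nat \<Rightarrow> nat) \<Rightarrow>
    (nat \<Rightarrow> 'a::field mat) \<times> (nat \<Rightarrow> 'a mat) \<Rightarrow> 'a mat" where
  "zeta n dx dy V = four_block_mat (M_Q n dx dy V) (1\<^sub>m (dY n dy))
                                   (1\<^sub>m (dX n dx)) (0\<^sub>m (dX n dx) (dY n dy))"

(* Block structure of d x d matrices, blocks numbered 1..2n+1.
   Row blocks: dy 0, ..., dy n, dx n, ..., dx 1.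
   Column blocks: dx n, ..., dx 1, dy 0, ..., dy n. *)
definition rsz :: "nat \<Rightarrow> (nat \<Rightarrow> nat) \<Rightarrow> (nat \<Rightarrow> nat) \<Rightarrow> nat \<Rightarrow> nat" where
  "rsz n dx dy k = (if k \<le> n + 1 then dy (k - 1) else dx (2 * n + 2 - k))"
definition csz :: "nat \<Rightarrow> (nat \<Rightarrow> nat) \<Rightarrow> (nat \<Rightarrow> nat) \<Rightarrow> nat \<Rightarrow> nat" where
  "csz n dx dy k = (if k \<le> n then dx (n + 1 - k) else dy (k - n - 1))"
(* 0-based start index of block k *)
definition roff :: "nat \<Rightarrow> (nat \<Rightarrow> nat) \<Rightarrow> (nat \<Rightarrow> nat) \<Rightarrow> nat \<Rightarrow> nat" where
  "roff n dx dy k = (\<Sum>m\<in>{1..<k}. rsz n dx dy m)"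
definition coff :: "nat \<Rightarrow> (nat \<Rightarrow> nat) \<Rightarrow> (nat \<Rightarrow> nat) \<Rightarrow> nat \<Rightarrow> nat" where
  "coff n dx dy k = (\<Sum>m\<in>{1..<k}. csz n dx dy m)"
definition rblock :: "nat \<Rightarrow> (nat \<Rightarrow> nat) \<Rightarrow> (nat \<Rightarrow> nat) \<Rightarrow> nat \<Rightarrow> nat set" where
  "rblock n dx dy k = {roff n dx dy k ..< roff n dx dy k + rsz n dx dy k}"
definition cblock :: "nat \<Rightarrow> (nat \<Rightarrow> nat) \<Rightarrow> (nat \<Rightarrow> nat) \<Rightarrow> nat \<Rightarrow> nat set" where
  "cblock n dx dy k = {coff n dx dy k ..< coff n dx dy k + csz n dx dy k}"

definition Zsub :: "nat \<Rightarrow> (nat \<Rightarrow> nat) \<Rightarrow> (nat \<Rightarrow> nat) \<Rightarrow> 'a mat \<Rightarrow> nat \<Rightarrow> nat \<Rightarrow> 'a mat" where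
  "Zsub n dx dy Z i j = submatrix Z {..< roff n dx dy (i + 1)} {..< coff n dx dy (j + 1)}"

(* block rank matrix b(r); b(r)_{i,j} = 0 outside [1,2n+1].  It is defined via
   an (arbitrary) representative V of O_r, as in the paper. *)
definition brank :: "'a::field itself \<Rightarrow> nat \<Rightarrow> (nat \<Rightarrow> nat) \<Rightarrow> (nat \<Rightarrow> nat) \<Rightarrow>
    (nat \<times> nat \<Rightarrow> nat) \<Rightarrow> nat \<Rightarrow> nat \<Rightarrow> nat" where
  "brank TYPE('a) n dx dy r i j =
     (if 1 \<le> i \<and> i \<le> 2 * n + 1 \<and> 1 \<le> j \<and> j \<le> 2 * n + 1
      then mrank (Zsub n dx dy
              (zeta n dx dy (SOME V. V \<in> (orbit_r n dx dy r :: (_ \<times> (nat \<Rightarrow> 'a mat)) set))) i j)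
      else 0)"

definition perm_mat :: "nat \<Rightarrow> 'a::field mat \<Rightarrow> bool" where
  "perm_mat d P \<longleftrightarrow> P \<in> carrier_mat d d \<and>
     (\<exists>\<sigma>. \<sigma> permutes {..<d} \<and> (\<forall>p<d. \<forall>q<d. P $$ (p, q) = (if \<sigma> p = q then 1 else 0)))"

definition ones_in_block :: "nat \<Rightarrow> (nat \<Rightarrow> nat) \<Rightarrow> (nat \<Rightarrow> nat) \<Rightarrow> 'a::field mat \<Rightarrow> nat \<Rightarrow> nat \<Rightarrow> nat" where
  "ones_in_block n dx dy P i j =
     card {(p, q). p \<in> rblock n dx dy i \<and> q \<in> cblock n dx dy j \<and> P $$ (p, q) = 1}"

definition nw_se_rows :: "nat \<Rightarrow> (nat \<Rightarrow> nat) \<Rightarrow> (nat \<Rightarrow> nat) \<Rightarrow> 'a::field mat \<Rightarrow> bool" where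
  "nw_se_rows n dx dy P \<longleftrightarrow> (\<forall>k\<in>{1..2*n+1}. \<forall>p1 q1 p2 q2.
      p1 \<in> rblock n dx dy k \<and> p2 \<in> rblock n dx dy k \<and> q1 < dim_col P \<and> q2 < dim_col P \<and>
      P $$ (p1, q1) = 1 \<and> P $$ (p2, q2) = 1 \<and> p1 < p2 \<longrightarrow> q1 < q2)"

definition nw_se_cols :: "nat \<Rightarrow> (nat \<Rightarrow> nat) \<Rightarrow> (nat \<Rightarrow> nat) \<Rightarrow> 'a::field mat \<Rightarrow> bool" where
  "nw_se_cols n dx dy P \<longleftrightarrow> (\<forall>k\<in>{1..2*n+1}. \<forall>p1 q1 p2 q2.
      q1 \<in> cblock n dx dy k \<and> q2 \<in> cblock n dx dy k \<and> p1 < dim_row P \<and> p2 < dim_row P \<and>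
      P $$ (p1, q1) = 1 \<and> P $$ (p2, q2) = 1 \<and> q1 < q2 \<longrightarrow> p1 < p2)"

end

theory Submission
  imports Defs
begin

definition blk :: "(nat \<Rightarrow> nat) \<Rightarrow> nat \<Rightarrow> nat set" where
  "blk R k = {R k ..< R (Suc k)}"

lemma card_decomp:
  assumes "mono R" "R 1 = 0" "finite A" "1 \<le> J"
  shows "card {x\<in>A. g x < R J} = (\<Sum>j\<in>{1..<J}. card {x\<in>A. g x \<in> blk R j})"
  using assms(4)
proof (induction J)
  case 0 then show ?case by simp
next
  case (Suc J)
  show ?case
  proof (cases "J = 0")
    case True then show ?thesis using assms(2) by simp
  next
    case False
    then have IH: "card {x\<in>A. g x < R J} = (\<Sum>j\<in>{1..<J}. card {x\<in>A. g x \<in> blk R j})"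
      using Suc by simp
    have mo: "R J \<le> R (Suc J)" using assms(1) by (simp add: monoD)
    have eq: "{x\<in>A. g x < R (Suc J)} = {x\<in>A. g x < R J} \<union> {x\<in>A. g x \<in> blk R J}"
      using mo by (auto simp: blk_def)
    have "card {x\<in>A. g x < R (Suc J)} = card {x\<in>A. g x < R J} + card {x\<in>A. g x \<in> blk R J}"
      unfolding eq by (rule card_Un_disjoint) (use assms(3) in \<open>auto simp: blk_def\<close>)
    also have "\<dots> = (\<Sum>j\<in>{1..<Suc J}. card {x\<in>A. g x \<in> blk R j})"
      using IH False by simp
    finally show ?thesis .
  qed
qed

lemma blk_uniq:
  assumes "mono R" "p \<in> blk R k1" "p \<in> blk R k2" shows "k1 = k2"
proof (rule ccontr)
  assume "k1 \<noteq> k2"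
  then consider "Suc k1 \<le> k2" | "Suc k2 \<le> k1" by linarith
  then show False
  proof cases
    case 1 then have "R (Suc k1) \<le> R k2" using assms(1) by (simp add: monoD)
    then show False using assms by (auto simp: blk_def)
  next
    case 2 then have "R (Suc k2) \<le> R k1" using assms(1) by (simp add: monoD)
    then show False using assms by (auto simp: blk_def)
  qed
qed

lemma blk_ex:
  assumes "mono R" "R 1 \<le> p" "p < R (Suc m)"
  shows "\<exists>k\<in>{1..m}. p \<in> blk R k"
  using assms(3)
proof (induction m)
  case 0 then show ?case using assms(2) by simp
next
  case (Suc m)
  show ?case
  proof (cases "p < R (Suc m)")
    case True then show ?thesis using Suc.IH by force
  next
    case False then have "p \<in> blk R (Suc m)" using Suc.prems by (simp add: blk_def)
    then show ?thesis by force
  qed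
qed

locale blocks =
  fixes d m :: nat and R C :: "nat \<Rightarrow> nat"
  assumes monoR: "mono R" and monoC: "mono C" and R1: "R 1 = 0" and C1: "C 1 = 0"
    and Rm: "R (Suc m) = d" and Cm: "C (Suc m) = d"
begin

definition nwr :: "(nat \<Rightarrow> nat) \<Rightarrow> bool" where
  "nwr \<sigma> \<longleftrightarrow> (\<forall>k\<in>{1..m}. \<forall>p1 p2. p1 \<in> blk R k \<longrightarrow> p2 \<in> blk R k \<longrightarrow> p1 < p2 \<longrightarrow> \<sigma> p1 < \<sigma> p2)"
definition nwc :: "(nat \<Rightarrow> nat) \<Rightarrow> bool" where
  "nwc \<sigma> \<longleftrightarrow> (\<forall>k\<in>{1..m}. \<forall>p1 p2. p1 < d \<longrightarrow> p2 < d \<longrightarrow> \<sigma> p1 \<in> blk C k \<longrightarrow> \<sigma> p2 \<in> blk C k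
      \<longrightarrow> \<sigma> p1 < \<sigma> p2 \<longrightarrow> p1 < p2)"

lemma R_le_d: "k \<le> Suc m \<Longrightarrow> R k \<le> d" using monoR Rm by (metis monoD)
lemma C_le_d: "k \<le> Suc m \<Longrightarrow> C k \<le> d" using monoC Cm by (metis monoD)

lemma core:
  assumes perm: "\<sigma> permutes {..<d}" and nr: "nwr \<sigma>" and nc: "nwc \<sigma>"
    and p: "p < d" and i: "i \<in> {1..m}" and j: "j \<in> {1..m}"
    and pi: "p \<in> blk R i" and pj: "\<sigma> p \<in> blk C j"
  shows "card {p'\<in>blk R i. \<sigma> p' < C j} \<le> p - R i"
    "p - R i < card {p'\<in>blk R i. \<sigma> p' < C (Suc j)}"
    "\<sigma> p = C j + card {p'. p' < R i \<and> \<sigma> p' \<in> blk C j} + (p - R i - card {p'\<in>blk R i. \<sigma> p' < C j})"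
proof -
  have inj: "inj_on \<sigma> {..<d}" using perm permutes_inj_on by blast
  have sd: "\<And>x. x < d \<Longrightarrow> \<sigma> x < d" using perm permutes_in_image by fastforce
  have Rid: "R (Suc i) \<le> d" using i R_le_d by simp
  have blkd: "\<And>x. x \<in> blk R i \<Longrightarrow> x < d" using Rid by (auto simp: blk_def)
  define X where "X = {p'\<in>blk R i. p' < p \<and> \<sigma> p' \<in> blk C j}"
  define A where "A = {p'\<in>blk R i. \<sigma> p' < C j}"
  define B where "B = {p'\<in>blk R i. \<sigma> p' \<in> blk C j}"
  define H where "H = {p'. p' < R i \<and> \<sigma> p' \<in> blk C j}"
  have fX: "finite X" "finite A" "finite B" "finite H"
    by (auto simp: X_def A_def B_def H_def blk_def)
  have S1: "{p'\<in>blk R i. p' < p} = A \<union> X"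
  proof
    show "{p'\<in>blk R i. p' < p} \<subseteq> A \<union> X"
    proof
      fix x assume x: "x \<in> {p'\<in>blk R i. p' < p}"
      then have "\<sigma> x < \<sigma> p" using nr i pi unfolding nwr_def by blast
      then have "\<sigma> x < C (Suc j)" using pj by (simp add: blk_def)
      then show "x \<in> A \<union> X" using x by (auto simp: A_def X_def blk_def)
    qed
  next
    show "A \<union> X \<subseteq> {p'\<in>blk R i. p' < p}"
    proof
      fix x assume x: "x \<in> A \<union> X"
      show "x \<in> {p'\<in>blk R i. p' < p}"
      proof (cases "x \<in> X")
        case True then show ?thesis by (simp add: X_def)
      next
        case False
        then have xA: "x \<in> blk R i" "\<sigma> x < C j" using x by (auto simp: A_def)
        have "\<not> p < x"
        proof
          assume "p < x"
          then have "\<sigma> p < \<sigma> x" using nr i pi xA(1) unfolding nwr_def by blast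
          then show False using xA pj by (simp add: blk_def)
        qed
        moreover have "x \<noteq> p" using xA pj by (auto simp: blk_def)
        ultimately show ?thesis using xA by simp
      qed
    qed
  qed
  have dAX: "A \<inter> X = {}" by (auto simp: A_def X_def blk_def)
  have cardRp: "card {p'\<in>blk R i. p' < p} = p - R i"
  proof -
    have "{p'\<in>blk R i. p' < p} = {R i..<p}" using pi by (auto simp: blk_def)
    then show ?thesis by simp
  qed
  have E1: "p - R i = card A + card X"
    using cardRp S1 card_Un_disjoint[OF fX(2) fX(1) dAX] by simp
  have XB: "X \<subset> B" using pi pj by (auto simp: X_def B_def)
  have cXB: "card X < card B" using psubset_card_mono[OF fX(3) XB] .
  have S3: "{p'\<in>blk R i. \<sigma> p' < C (Suc j)} = A \<union> B"
    using monoD[OF monoC, of j "Suc j"] by (auto simp: A_def B_def blk_def)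
  have dAB: "A \<inter> B = {}" by (auto simp: A_def B_def blk_def)
  have E3: "card {p'\<in>blk R i. \<sigma> p' < C (Suc j)} = card A + card B"
    using S3 card_Un_disjoint[OF fX(2) fX(3) dAB] by simp
  show "card {p'\<in>blk R i. \<sigma> p' < C j} \<le> p - R i" using E1 by (simp add: A_def)
  show "p - R i < card {p'\<in>blk R i. \<sigma> p' < C (Suc j)}" using E1 E3 cXB by simp
  define Y where "Y = {p'. p' < d \<and> C j \<le> \<sigma> p' \<and> \<sigma> p' < \<sigma> p}"
  have imY: "\<sigma> ` Y = {C j..<\<sigma> p}"
  proof
    show "\<sigma> ` Y \<subseteq> {C j..<\<sigma> p}" by (auto simp: Y_def)
  next
    show "{C j..<\<sigma> p} \<subseteq> \<sigma> ` Y"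
    proof
      fix q assume q: "q \<in> {C j..<\<sigma> p}"
      then have "q < d" using sd[OF p] by simp
      then have "q \<in> \<sigma> ` {..<d}" using permutes_image[OF perm] by simp
      then obtain x where "x < d" "q = \<sigma> x" by auto
      then show "q \<in> \<sigma> ` Y" using q by (auto simp: Y_def)
    qed
  qed
  have cY: "card Y = \<sigma> p - C j"
  proof -
    have "inj_on \<sigma> Y" using inj by (rule inj_on_subset) (auto simp: Y_def)
    then have "card Y = card (\<sigma> ` Y)" by (simp add: card_image)
    then show ?thesis using imY by simp
  qed
  have SY: "Y = H \<union> X"
  proof
    show "Y \<subseteq> H \<union> X"
    proof
      fix x assume x: "x \<in> Y"
      then have xd: "x < d" and x1: "C j \<le> \<sigma> x" and x2: "\<sigma> x < \<sigma> p" by (auto simp: Y_def)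
      have xj: "\<sigma> x \<in> blk C j" using x1 x2 pj by (auto simp: blk_def)
      have "x < p" using nc j xd p xj pj x2 unfolding nwc_def by blast
      then show "x \<in> H \<union> X"
        using xj pi by (cases "x < R i") (auto simp: H_def X_def blk_def)
    qed
  next
    show "H \<union> X \<subseteq> Y"
    proof
      fix x assume x: "x \<in> H \<union> X"
      then have xj: "\<sigma> x \<in> blk C j" and xp: "x < p"
        using pi by (auto simp: H_def X_def blk_def)
      have xd: "x < d" using xp p by simp
      have "x \<noteq> p" using xp by simp
      then have "\<sigma> x \<noteq> \<sigma> p" using inj xd p by (meson inj_on_contraD lessThan_iff)
      moreover have "\<not> \<sigma> p < \<sigma> x"
      proof
        assume "\<sigma> p < \<sigma> x"
        then have "p < x" using nc j xd p xj pj unfolding nwc_def by blast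
        then show False using xp by simp
      qed
      ultimately show "x \<in> Y" using xj xd by (auto simp: Y_def blk_def)
    qed
  qed
  have dHX: "H \<inter> X = {}" by (auto simp: H_def X_def blk_def)
  have "card Y = card H + card X" using SY card_Un_disjoint[OF fX(4) fX(1) dHX] by simp
  then have "\<sigma> p - C j = card H + card X" using cY by simp
  moreover have "C j \<le> \<sigma> p" using pj by (simp add: blk_def)
  ultimately show "\<sigma> p = C j + card {p'. p' < R i \<and> \<sigma> p' \<in> blk C j} + (p - R i - card {p'\<in>blk R i. \<sigma> p' < C j})"
    using E1 by (simp add: H_def A_def)
qed


definition bc :: "(nat \<Rightarrow> nat) \<Rightarrow> nat \<Rightarrow> nat \<Rightarrow> nat" where
  "bc \<sigma> i j = card {p\<in>blk R i. \<sigma> p \<in> blk C j}"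

lemma G_sum: "1 \<le> J \<Longrightarrow> card {p'\<in>blk R i. \<sigma> p' < C J} = (\<Sum>j\<in>{1..<J}. bc \<sigma> i j)"
  unfolding bc_def by (rule card_decomp[OF monoC C1]) (auto simp: blk_def)

lemma H_sum:
  assumes "1 \<le> I" "I \<le> Suc m"
  shows "card {p'. p' < R I \<and> \<sigma> p' \<in> blk C j} = (\<Sum>i\<in>{1..<I}. bc \<sigma> i j)"
proof -
  define A where "A = {p'. p' < d \<and> \<sigma> p' \<in> blk C j}"
  have fA: "finite A" by (simp add: A_def)
  have "card {x\<in>A. id x < R I} = (\<Sum>i\<in>{1..<I}. card {x\<in>A. id x \<in> blk R i})"
    by (rule card_decomp[OF monoR R1 fA assms(1)])
  moreover have "{x\<in>A. id x < R I} = {p'. p' < R I \<and> \<sigma> p' \<in> blk C j}"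
    using R_le_d[OF assms(2)] by (auto simp: A_def)
  moreover have "\<And>i. i \<in> {1..<I} \<Longrightarrow> {x\<in>A. id x \<in> blk R i} = {p\<in>blk R i. \<sigma> p \<in> blk C j}"
  proof -
    fix i assume "i \<in> {1..<I}"
    then have "R (Suc i) \<le> d" using assms R_le_d by simp
    then show "{x\<in>A. id x \<in> blk R i} = {p\<in>blk R i. \<sigma> p \<in> blk C j}"
      by (auto simp: A_def blk_def)
  qed
  ultimately show ?thesis unfolding bc_def by simp
qed

lemma mono_G: "mono (\<lambda>J. card {p'\<in>blk R i. \<sigma> p' < C J})"
proof (rule monoI)
  fix x y :: nat assume "x \<le> y"
  then have "C x \<le> C y" using monoC by (simp add: monoD)
  then show "card {p'\<in>blk R i. \<sigma> p' < C x} \<le> card {p'\<in>blk R i. \<sigma> p' < C y}"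
    by (intro card_mono) (auto simp: blk_def)
qed

lemma uniq:
  assumes p1: "\<sigma>1 permutes {..<d}" "nwr \<sigma>1" "nwc \<sigma>1"
    and p2: "\<sigma>2 permutes {..<d}" "nwr \<sigma>2" "nwc \<sigma>2"
    and eq: "\<forall>i\<in>{1..m}. \<forall>j\<in>{1..m}. bc \<sigma>1 i j = bc \<sigma>2 i j"
  shows "\<sigma>1 = \<sigma>2"
proof
  fix p
  show "\<sigma>1 p = \<sigma>2 p"
  proof (cases "p < d")
    case False
    then show ?thesis using p1(1) p2(1) by (simp add: permutes_def)
  next
    case p: True
    obtain i where i: "i \<in> {1..m}" "p \<in> blk R i" using blk_ex[OF monoR, of p m] p R1 Rm by auto
    have s1: "\<sigma>1 p < d" using p1(1) p permutes_in_image by fastforce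
    have s2: "\<sigma>2 p < d" using p2(1) p permutes_in_image by fastforce
    obtain j1 where j1: "j1 \<in> {1..m}" "\<sigma>1 p \<in> blk C j1" using blk_ex[OF monoC, of "\<sigma>1 p" m] s1 C1 Cm by auto
    obtain j2 where j2: "j2 \<in> {1..m}" "\<sigma>2 p \<in> blk C j2" using blk_ex[OF monoC, of "\<sigma>2 p" m] s2 C1 Cm by auto
    define G1 where "G1 = (\<lambda>J. card {p'\<in>blk R i. \<sigma>1 p' < C J})"
    define G2 where "G2 = (\<lambda>J. card {p'\<in>blk R i. \<sigma>2 p' < C J})"
    have GG: "\<And>J. 1 \<le> J \<Longrightarrow> J \<le> Suc m \<Longrightarrow> G1 J = G2 J"
    proof -
      fix J :: nat assume J: "1 \<le> J" "J \<le> Suc m"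
      have "(\<Sum>j\<in>{1..<J}. bc \<sigma>1 i j) = (\<Sum>j\<in>{1..<J}. bc \<sigma>2 i j)"
        using eq i(1) J by (intro sum.cong) auto
      then show "G1 J = G2 J" unfolding G1_def G2_def using G_sum J by simp
    qed
    note c1 = core[OF p1 p i(1) j1(1) i(2) j1(2)]
    note c2 = core[OF p2 p i(1) j2(1) i(2) j2(2)]
    have "p - R i \<in> blk G1 j1" using c1 unfolding blk_def G1_def by simp
    moreover have "p - R i \<in> blk G1 j2"
    proof -
      have "G2 j2 \<le> p - R i" "p - R i < G2 (Suc j2)" using c2(1,2) unfolding G2_def by simp_all
      then show ?thesis using GG[of j2] GG[of "Suc j2"] j2(1) unfolding blk_def by simp
    qed
    ultimately have jj: "j1 = j2" using blk_uniq[OF mono_G[of i \<sigma>1]] unfolding G1_def by blast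
    have HH: "card {p'. p' < R i \<and> \<sigma>1 p' \<in> blk C j1} = card {p'. p' < R i \<and> \<sigma>2 p' \<in> blk C j1}"
    proof -
      have "(\<Sum>i'\<in>{1..<i}. bc \<sigma>1 i' j1) = (\<Sum>i'\<in>{1..<i}. bc \<sigma>2 i' j1)"
        using eq i(1) j1(1) by (intro sum.cong) auto
      then show ?thesis using H_sum i(1) by simp
    qed
    show ?thesis using c1(3) c2(3) jj HH GG[of j1] j1(1) unfolding G1_def G2_def by simp
  qed
qed


definition Gs :: "(nat \<Rightarrow> nat) \<Rightarrow> nat \<Rightarrow> nat \<Rightarrow> nat" where
  "Gs \<sigma> i J = (\<Sum>j\<in>{1..<J}. bc \<sigma> i j)"
definition Hs :: "(nat \<Rightarrow> nat) \<Rightarrow> nat \<Rightarrow> nat \<Rightarrow> nat" where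
  "Hs \<sigma> I j = (\<Sum>i\<in>{1..<I}. bc \<sigma> i j)"

lemma mono_Gs: "mono (Gs \<sigma> i)"
  unfolding Gs_def by (rule monoI, rule sum_mono2) auto
lemma mono_Hs: "I1 \<le> I2 \<Longrightarrow> Hs \<sigma> I1 j \<le> Hs \<sigma> I2 j"
  unfolding Hs_def by (rule sum_mono2) auto
lemma Gs_Suc: "1 \<le> j \<Longrightarrow> Gs \<sigma> i (Suc j) = Gs \<sigma> i j + bc \<sigma> i j"
  unfolding Gs_def by simp
lemma Hs_Suc: "1 \<le> i \<Longrightarrow> Hs \<sigma> (Suc i) j = Hs \<sigma> i j + bc \<sigma> i j"
  unfolding Hs_def by simp
lemma Gs_1: "Gs \<sigma> i 1 = 0" unfolding Gs_def by simp

lemma rowsum: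
  assumes perm: "\<sigma> permutes {..<d}" and i: "i \<in> {1..m}"
  shows "Gs \<sigma> i (Suc m) = R (Suc i) - R i"
proof -
  have "Gs \<sigma> i (Suc m) = card {p'\<in>blk R i. \<sigma> p' < C (Suc m)}"
    unfolding Gs_def using G_sum by simp
  also have "{p'\<in>blk R i. \<sigma> p' < C (Suc m)} = blk R i"
  proof -
    have "R (Suc i) \<le> d" using i R_le_d by simp
    then have "\<And>x. x \<in> blk R i \<Longrightarrow> \<sigma> x < d"
      using perm permutes_in_image unfolding blk_def by fastforce
    then show ?thesis using Cm by auto
  qed
  finally show ?thesis by (simp add: blk_def)
qed

lemma colsum:
  assumes perm: "\<sigma> permutes {..<d}" and j: "j \<in> {1..m}"
  shows "Hs \<sigma> (Suc m) j = C (Suc j) - C j"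
proof -
  have "Hs \<sigma> (Suc m) j = card {p'. p' < d \<and> \<sigma> p' \<in> blk C j}"
    unfolding Hs_def using H_sum[of "Suc m"] Rm by simp
  also have "\<dots> = card (\<sigma> ` {p'. p' < d \<and> \<sigma> p' \<in> blk C j})"
    using permutes_inj_on[OF perm] by (intro card_image[symmetric]) (auto intro: inj_on_subset)
  also have "\<sigma> ` {p'. p' < d \<and> \<sigma> p' \<in> blk C j} = blk C j"
  proof
    show "\<sigma> ` {p'. p' < d \<and> \<sigma> p' \<in> blk C j} \<subseteq> blk C j" by auto
    show "blk C j \<subseteq> \<sigma> ` {p'. p' < d \<and> \<sigma> p' \<in> blk C j}"
    proof
      fix q assume q: "q \<in> blk C j"
      have "C (Suc j) \<le> d" using j C_le_d by simp
      then have "q \<in> \<sigma> ` {..<d}" using q permutes_image[OF perm] by (auto simp: blk_def)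
      then show "q \<in> \<sigma> ` {p'. p' < d \<and> \<sigma> p' \<in> blk C j}" using q by auto
    qed
  qed
  finally show ?thesis by (simp add: blk_def)
qed

definition tau :: "(nat \<Rightarrow> nat) \<Rightarrow> nat \<Rightarrow> nat" where
  "tau \<sigma> p = (if p < d then
     (let i = (THE i. i \<in> {1..m} \<and> p \<in> blk R i);
          j = (THE j. j \<in> {1..m} \<and> p - R i \<in> blk (Gs \<sigma> i) j)
      in C j + Hs \<sigma> i j + (p - R i - Gs \<sigma> i j)) else p)"

lemma tau_ex:
  assumes perm: "\<sigma> permutes {..<d}" and p: "p < d"
  shows "\<exists>i j. i \<in> {1..m} \<and> p \<in> blk R i \<and> j \<in> {1..m} \<and> p - R i \<in> blk (Gs \<sigma> i) j \<and>
     tau \<sigma> p = C j + Hs \<sigma> i j + (p - R i - Gs \<sigma> i j)"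
proof -
  obtain i where i: "i \<in> {1..m}" "p \<in> blk R i" using blk_ex[OF monoR, of p m] p R1 Rm by auto
  have ti: "(THE i. i \<in> {1..m} \<and> p \<in> blk R i) = i"
    using i blk_uniq[OF monoR] by blast
  have x: "p - R i < Gs \<sigma> i (Suc m)" using rowsum[OF perm i(1)] i(2) by (auto simp: blk_def)
  obtain j where j: "j \<in> {1..m}" "p - R i \<in> blk (Gs \<sigma> i) j"
    using blk_ex[OF mono_Gs, of \<sigma> i "p - R i" m] x Gs_1 by auto
  have tj: "(THE j. j \<in> {1..m} \<and> p - R i \<in> blk (Gs \<sigma> i) j) = j"
    using j blk_uniq[OF mono_Gs] by blast
  show ?thesis using i j ti tj p unfolding tau_def Let_def by auto
qed

lemma tau_in:
  assumes perm: "\<sigma> permutes {..<d}" and i: "i \<in> {1..m}" and j: "j \<in> {1..m}"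
    and x: "p - R i \<in> blk (Gs \<sigma> i) j" 
  shows "Hs \<sigma> i j + (p - R i - Gs \<sigma> i j) < C (Suc j) - C j"
proof -
  have "p - R i - Gs \<sigma> i j < bc \<sigma> i j" using x Gs_Suc[of j \<sigma> i] j by (auto simp: blk_def)
  moreover have "Hs \<sigma> i j + bc \<sigma> i j \<le> Hs \<sigma> (Suc m) j"
    using Hs_Suc[of i \<sigma> j] i mono_Hs[of "Suc i" "Suc m" \<sigma> j] by auto
  ultimately show ?thesis using colsum[OF perm j] by simp
qed

lemma tau_blk:
  assumes perm: "\<sigma> permutes {..<d}" and i: "i \<in> {1..m}" and j: "j \<in> {1..m}"
    and x: "p - R i \<in> blk (Gs \<sigma> i) j"
    and t: "tau \<sigma> p = C j + Hs \<sigma> i j + (p - R i - Gs \<sigma> i j)"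
  shows "tau \<sigma> p \<in> blk C j"
  using tau_in[OF perm i j x] t unfolding blk_def by simp


lemma exist_nwse:
  assumes perm: "\<sigma> permutes {..<d}"
  shows "\<exists>\<tau>. \<tau> permutes {..<d} \<and> nwr \<tau> \<and> nwc \<tau> \<and> (\<forall>i\<in>{1..m}. \<forall>j\<in>{1..m}. bc \<tau> i j = bc \<sigma> i j)"
proof (intro exI conjI)
  let ?t = "tau \<sigma>"
  have td: "\<And>p. p < d \<Longrightarrow> ?t p < d"
  proof -
    fix p assume p: "p < d"
    then obtain i j where ij: "i \<in> {1..m}" "p \<in> blk R i" "j \<in> {1..m}" "p - R i \<in> blk (Gs \<sigma> i) j"
      "?t p = C j + Hs \<sigma> i j + (p - R i - Gs \<sigma> i j)" using tau_ex[OF perm] by blast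
    have "?t p \<in> blk C j" using tau_blk[OF perm ij(1,3,4,5)] .
    moreover have "C (Suc j) \<le> d" using ij(3) C_le_d by simp
    ultimately show "?t p < d" by (simp add: blk_def)
  qed
  have inj: "inj_on ?t {..<d}"
  proof (rule inj_onI)
    fix p1 p2 assume p1: "p1 \<in> {..<d}" and p2: "p2 \<in> {..<d}" and eq: "?t p1 = ?t p2"
    obtain i1 j1 where a: "i1 \<in> {1..m}" "p1 \<in> blk R i1" "j1 \<in> {1..m}" "p1 - R i1 \<in> blk (Gs \<sigma> i1) j1"
      "?t p1 = C j1 + Hs \<sigma> i1 j1 + (p1 - R i1 - Gs \<sigma> i1 j1)" using tau_ex[OF perm] p1 by blast
    obtain i2 j2 where b: "i2 \<in> {1..m}" "p2 \<in> blk R i2" "j2 \<in> {1..m}" "p2 - R i2 \<in> blk (Gs \<sigma> i2) j2"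
      "?t p2 = C j2 + Hs \<sigma> i2 j2 + (p2 - R i2 - Gs \<sigma> i2 j2)" using tau_ex[OF perm] p2 by blast
    have jj: "j1 = j2" using tau_blk[OF perm a(1,3,4,5)] tau_blk[OF perm b(1,3,4,5)] eq blk_uniq[OF monoC] by metis
    have k1: "p1 - R i1 - Gs \<sigma> i1 j1 < bc \<sigma> i1 j1" using a(3,4) Gs_Suc[of j1 \<sigma> i1] by (auto simp: blk_def)
    have k2: "p2 - R i2 - Gs \<sigma> i2 j1 < bc \<sigma> i2 j1" using b(3,4) jj Gs_Suc[of j1 \<sigma> i2] by (auto simp: blk_def)
    have ii: "i1 = i2"
    proof (rule ccontr)
      assume "i1 \<noteq> i2"
      then consider "Suc i1 \<le> i2" | "Suc i2 \<le> i1" by linarith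
      then show False
      proof cases
        case 1
        then have "Hs \<sigma> i1 j1 + bc \<sigma> i1 j1 \<le> Hs \<sigma> i2 j1" using Hs_Suc[of i1 \<sigma> j1] a(1) mono_Hs[of "Suc i1" i2 \<sigma> j1] by simp
        then show False using eq a(5) b(5) jj k1 by simp
      next
        case 2
        then have "Hs \<sigma> i2 j1 + bc \<sigma> i2 j1 \<le> Hs \<sigma> i1 j1" using Hs_Suc[of i2 \<sigma> j1] b(1) mono_Hs[of "Suc i2" i1 \<sigma> j1] by simp
        then show False using eq a(5) b(5) jj k2 by simp
      qed
    qed
    show "p1 = p2" using eq a(2,4,5) b(2,4,5) ii jj by (auto simp: blk_def)
  qed
  show tp: "?t permutes {..<d}"
  proof (rule bij_imp_permutes)
    have "?t ` {..<d} = {..<d}" using endo_inj_surj[of "{..<d}" ?t] td inj by auto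
    then show "bij_betw ?t {..<d} {..<d}" using inj by (simp add: bij_betw_def)
    show "\<And>x. x \<notin> {..<d} \<Longrightarrow> ?t x = x" by (simp add: tau_def)
  qed
  show "\<forall>i\<in>{1..m}. \<forall>j\<in>{1..m}. bc ?t i j = bc \<sigma> i j"
  proof (intro ballI)
    fix i j assume i: "i \<in> {1..m}" and j: "j \<in> {1..m}"
    have Rid: "R (Suc i) \<le> d" using i R_le_d by simp
    have GR: "Gs \<sigma> i (Suc j) \<le> R (Suc i) - R i"
      using rowsum[OF perm i] monoD[OF mono_Gs[of \<sigma> i], of "Suc j" "Suc m"] j by simp
    have "{p\<in>blk R i. ?t p \<in> blk C j} = {R i + Gs \<sigma> i j ..< R i + Gs \<sigma> i (Suc j)}"
    proof (rule Set.set_eqI, rule iffI)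
      fix p assume p: "p \<in> {p\<in>blk R i. ?t p \<in> blk C j}"
      then have pd: "p < d" using Rid by (auto simp: blk_def)
      obtain i1 j1 where a: "i1 \<in> {1..m}" "p \<in> blk R i1" "j1 \<in> {1..m}" "p - R i1 \<in> blk (Gs \<sigma> i1) j1"
        "?t p = C j1 + Hs \<sigma> i1 j1 + (p - R i1 - Gs \<sigma> i1 j1)" using tau_ex[OF perm pd] by blast
      have "i1 = i" using a(2) p blk_uniq[OF monoR] by blast
      moreover have "j1 = j" using tau_blk[OF perm a(1,3,4,5)] p blk_uniq[OF monoC] by blast
      ultimately show "p \<in> {R i + Gs \<sigma> i j ..< R i + Gs \<sigma> i (Suc j)}" using a(2,4) by (auto simp: blk_def)
    next
      fix p assume p: "p \<in> {R i + Gs \<sigma> i j ..< R i + Gs \<sigma> i (Suc j)}"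
      have pi: "p \<in> blk R i" using p GR by (auto simp: blk_def)
      then have pd: "p < d" using Rid by (auto simp: blk_def)
      obtain i1 j1 where a: "i1 \<in> {1..m}" "p \<in> blk R i1" "j1 \<in> {1..m}" "p - R i1 \<in> blk (Gs \<sigma> i1) j1"
        "?t p = C j1 + Hs \<sigma> i1 j1 + (p - R i1 - Gs \<sigma> i1 j1)" using tau_ex[OF perm pd] by blast
      have ii: "i1 = i" using a(2) pi blk_uniq[OF monoR] by blast
      have "p - R i \<in> blk (Gs \<sigma> i) j" using p by (auto simp: blk_def)
      then have "j1 = j" using a(4) ii blk_uniq[OF mono_Gs] by blast
      then show "p \<in> {p\<in>blk R i. ?t p \<in> blk C j}" using pi tau_blk[OF perm a(1,3,4,5)] by simp
    qed
    then show "bc ?t i j = bc \<sigma> i j" using Gs_Suc[of j \<sigma> i] j unfolding bc_def[of ?t] by simp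
  qed
  show "nwr ?t" unfolding nwr_def
  proof (intro ballI allI impI)
    fix k p1 p2 assume k: "k \<in> {1..m}" and p1: "p1 \<in> blk R k" and p2: "p2 \<in> blk R k" and lt: "p1 < p2"
    have Rid: "R (Suc k) \<le> d" using k R_le_d by simp
    have p1d: "p1 < d" and p2d: "p2 < d" using p1 p2 Rid by (auto simp: blk_def)
    obtain i1 j1 where a: "i1 \<in> {1..m}" "p1 \<in> blk R i1" "j1 \<in> {1..m}" "p1 - R i1 \<in> blk (Gs \<sigma> i1) j1"
      "?t p1 = C j1 + Hs \<sigma> i1 j1 + (p1 - R i1 - Gs \<sigma> i1 j1)" using tau_ex[OF perm p1d] by blast
    obtain i2 j2 where b: "i2 \<in> {1..m}" "p2 \<in> blk R i2" "j2 \<in> {1..m}" "p2 - R i2 \<in> blk (Gs \<sigma> i2) j2"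
      "?t p2 = C j2 + Hs \<sigma> i2 j2 + (p2 - R i2 - Gs \<sigma> i2 j2)" using tau_ex[OF perm p2d] by blast
    have i1: "i1 = k" using a(2) p1 blk_uniq[OF monoR] by blast
    have i2: "i2 = k" using b(2) p2 blk_uniq[OF monoR] by blast
    have x: "p1 - R k < p2 - R k" using lt p1 by (auto simp: blk_def)
    have "\<not> j2 < j1"
    proof
      assume "j2 < j1"
      then have "Gs \<sigma> k (Suc j2) \<le> Gs \<sigma> k j1" using mono_Gs by (simp add: monoD)
      then show False using a(4) b(4) i1 i2 x by (auto simp: blk_def)
    qed
    then consider "j1 < j2" | "j1 = j2" by linarith
    then show "?t p1 < ?t p2"
    proof cases
      case 1
      then have "C (Suc j1) \<le> C j2" using monoC by (simp add: monoD)
      then show ?thesis using tau_blk[OF perm a(1,3,4,5)] tau_blk[OF perm b(1,3,4,5)] by (auto simp: blk_def)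
    next
      case 2
      then show ?thesis using a(4,5) b(4,5) i1 i2 x by (auto simp: blk_def)
    qed
  qed
  show "nwc ?t" unfolding nwc_def
  proof (intro ballI allI impI)
    fix k p1 p2 assume k: "k \<in> {1..m}" and p1d: "p1 < d" and p2d: "p2 < d" and t1: "?t p1 \<in> blk C k"
      and t2: "?t p2 \<in> blk C k" and lt: "?t p1 < ?t p2"
    obtain i1 j1 where a: "i1 \<in> {1..m}" "p1 \<in> blk R i1" "j1 \<in> {1..m}" "p1 - R i1 \<in> blk (Gs \<sigma> i1) j1"
      "?t p1 = C j1 + Hs \<sigma> i1 j1 + (p1 - R i1 - Gs \<sigma> i1 j1)" using tau_ex[OF perm p1d] by blast
    obtain i2 j2 where b: "i2 \<in> {1..m}" "p2 \<in> blk R i2" "j2 \<in> {1..m}" "p2 - R i2 \<in> blk (Gs \<sigma> i2) j2"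
      "?t p2 = C j2 + Hs \<sigma> i2 j2 + (p2 - R i2 - Gs \<sigma> i2 j2)" using tau_ex[OF perm p2d] by blast
    have j1: "j1 = k" using tau_blk[OF perm a(1,3,4,5)] t1 blk_uniq[OF monoC] by blast
    have j2: "j2 = k" using tau_blk[OF perm b(1,3,4,5)] t2 blk_uniq[OF monoC] by blast
    have k2: "p2 - R i2 - Gs \<sigma> i2 k < bc \<sigma> i2 k" using b(3,4) j2 Gs_Suc[of k \<sigma> i2] by (auto simp: blk_def)
    consider "i1 < i2" | "i1 = i2" | "i2 < i1" by linarith
    then show "p1 < p2"
    proof cases
      case 1
      then have "R (Suc i1) \<le> R i2" using monoR by (simp add: monoD)
      then show ?thesis using a(2) b(2) by (auto simp: blk_def)
    next
      case 2
      then show ?thesis using a(2,4,5) b(2,4,5) j1 j2 lt by (auto simp: blk_def)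
    next
      case 3
      then have "Hs \<sigma> i2 k + bc \<sigma> i2 k \<le> Hs \<sigma> i1 k" using Hs_Suc[of i2 \<sigma> k] b(1) mono_Hs[of "Suc i2" i1 \<sigma> k] by simp
      then show ?thesis using lt a(5) b(5) j1 j2 k2 by simp
    qed
  qed
qed

end

definition indep :: "'a::field mat \<Rightarrow> nat \<Rightarrow> nat set \<Rightarrow> bool" where
  "indep Z a S \<longleftrightarrow> (\<forall>c. (\<forall>p<a. (\<Sum>j\<in>S. c j * Z $$ (p, j)) = 0) \<longrightarrow> (\<forall>j\<in>S. c j = 0))"
definition inspan :: "'a::field mat \<Rightarrow> nat \<Rightarrow> (nat \<Rightarrow> 'a) \<Rightarrow> nat set \<Rightarrow> bool" where
  "inspan Z a v S \<longleftrightarrow> (\<exists>c. \<forall>p<a. v p = (\<Sum>j\<in>S. c j * Z $$ (p, j)))"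
definition colf :: "'a::field mat \<Rightarrow> nat \<Rightarrow> nat \<Rightarrow> 'a" where
  "colf Z b = (\<lambda>p. Z $$ (p, b))"
definition fr :: "'a::field mat \<Rightarrow> nat \<Rightarrow> nat \<Rightarrow> nat" where
  "fr Z a b = Max (card ` {S. S \<subseteq> {..<b} \<and> indep Z a S})"

lemma indep_empty: "indep Z a {}" by (simp add: indep_def)

lemma fr_fin: "finite {S. S \<subseteq> {..<b} \<and> indep Z a S}"
  by (rule finite_subset[of _ "Pow {..<b}"]) auto

lemma fr_ge: "S \<subseteq> {..<b} \<Longrightarrow> indep Z a S \<Longrightarrow> card S \<le> fr Z a b"
  unfolding fr_def by (rule Max_ge) (use fr_fin in auto)

lemma fr_obt: "\<exists>S. S \<subseteq> {..<b} \<and> indep Z a S \<and> card S = fr Z a b"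
proof -
  have "fr Z a b \<in> card ` {S. S \<subseteq> {..<b} \<and> indep Z a S}"
    unfolding fr_def by (rule Max_in) (use fr_fin indep_empty in auto)
  then show ?thesis by auto
qed

lemma fr_le_b: "fr Z a b \<le> b"
proof -
  obtain S where "S \<subseteq> {..<b}" "card S = fr Z a b" using fr_obt by blast
  then show ?thesis using card_mono[of "{..<b}" S] by simp
qed

lemma indep_subset:
  assumes "finite T" "indep Z a T" "S \<subseteq> T" shows "indep Z a S"
  unfolding indep_def
proof (intro allI impI ballI)
  fix c j assume h: "\<forall>p<a. (\<Sum>j\<in>S. c j * Z $$ (p, j)) = 0" and j: "j \<in> S"
  define c' where "c' = (\<lambda>j. if j \<in> S then c j else 0)"
  have "\<forall>p<a. (\<Sum>j\<in>T. c' j * Z $$ (p, j)) = 0"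
  proof (intro allI impI)
    fix p assume p: "p < a"
    have "(\<Sum>j\<in>T. c' j * Z $$ (p, j)) = (\<Sum>j\<in>S. c' j * Z $$ (p, j))"
      by (rule sum.mono_neutral_right) (use assms in \<open>auto simp: c'_def\<close>)
    also have "\<dots> = (\<Sum>j\<in>S. c j * Z $$ (p, j))" by (simp add: c'_def)
    finally show "(\<Sum>j\<in>T. c' j * Z $$ (p, j)) = 0" using h p by simp
  qed
  then have "c' j = 0" using assms(2,3) j unfolding indep_def by blast
  then show "c j = 0" using j by (simp add: c'_def)
qed

lemma indep_rows: "indep Z a S \<Longrightarrow> a \<le> a' \<Longrightarrow> indep Z a' S"
  unfolding indep_def by auto

lemma span_rows: "inspan Z a' v S \<Longrightarrow> a \<le> a' \<Longrightarrow> inspan Z a v S"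
  unfolding inspan_def by auto

lemma span_mono:
  assumes "inspan Z a v S" "S \<subseteq> T" "finite T" shows "inspan Z a v T"
proof -
  obtain c where c: "\<forall>p<a. v p = (\<Sum>j\<in>S. c j * Z $$ (p, j))" using assms(1) unfolding inspan_def by blast
  define c' where "c' = (\<lambda>j. if j \<in> S then c j else 0)"
  have "\<forall>p<a. v p = (\<Sum>j\<in>T. c' j * Z $$ (p, j))"
  proof (intro allI impI)
    fix p assume p: "p < a"
    have "(\<Sum>j\<in>T. c' j * Z $$ (p, j)) = (\<Sum>j\<in>S. c' j * Z $$ (p, j))"
      by (rule sum.mono_neutral_right) (use assms in \<open>auto simp: c'_def\<close>)
    also have "\<dots> = (\<Sum>j\<in>S. c j * Z $$ (p, j))" by (simp add: c'_def)
    finally show "v p = (\<Sum>j\<in>T. c' j * Z $$ (p, j))" using c p by simp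
  qed
  then show ?thesis unfolding inspan_def by blast
qed

lemma span_self: assumes "j \<in> S" "finite S" shows "inspan Z a (colf Z j) S"
proof -
  have "inspan Z a (colf Z j) {j}" unfolding inspan_def colf_def by (rule exI[of _ "\<lambda>_. 1"]) simp
  then show ?thesis by (rule span_mono) (use assms in auto)
qed

lemma span_trans:
  assumes "finite S" "\<forall>j\<in>S. inspan Z a (colf Z j) T" "inspan Z a v S"
  shows "inspan Z a v T"
proof -
  have "\<forall>j\<in>S. \<exists>e. \<forall>p<a. Z $$ (p, j) = (\<Sum>k\<in>T. e k * Z $$ (p, k))"
    using assms(2) unfolding inspan_def colf_def by blast
  from bchoice[OF this] obtain e where e: "\<forall>j\<in>S. \<forall>p<a. Z $$ (p, j) = (\<Sum>k\<in>T. e j k * Z $$ (p, k))"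
    by blast
  obtain c where c: "\<forall>p<a. v p = (\<Sum>j\<in>S. c j * Z $$ (p, j))" using assms(3) unfolding inspan_def by blast
  have "\<forall>p<a. v p = (\<Sum>k\<in>T. (\<Sum>j\<in>S. c j * e j k) * Z $$ (p, k))"
  proof (intro allI impI)
    fix p assume p: "p < a"
    have "v p = (\<Sum>j\<in>S. c j * Z $$ (p, j))" using c p by blast
    also have "\<dots> = (\<Sum>j\<in>S. c j * (\<Sum>k\<in>T. e j k * Z $$ (p, k)))"
    proof (rule sum.cong[OF refl])
      fix j assume j: "j \<in> S"
      have "Z $$ (p, j) = (\<Sum>k\<in>T. e j k * Z $$ (p, k))" using e[rule_format, OF j p] .
      then show "c j * Z $$ (p, j) = c j * (\<Sum>k\<in>T. e j k * Z $$ (p, k))" by (rule arg_cong)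
    qed
    also have "\<dots> = (\<Sum>j\<in>S. \<Sum>k\<in>T. c j * e j k * Z $$ (p, k))"
      by (simp add: sum_distrib_left mult.assoc)
    also have "\<dots> = (\<Sum>k\<in>T. \<Sum>j\<in>S. c j * e j k * Z $$ (p, k))" by (rule sum.swap)
    also have "\<dots> = (\<Sum>k\<in>T. (\<Sum>j\<in>S. c j * e j k) * Z $$ (p, k))"
      by (simp add: sum_distrib_right)
    finally show "v p = (\<Sum>k\<in>T. (\<Sum>j\<in>S. c j * e j k) * Z $$ (p, k))" .
  qed
  then show ?thesis unfolding inspan_def by (rule exI[of _ "\<lambda>k. \<Sum>j\<in>S. c j * e j k"])
qed

lemma indep_insert:
  assumes S: "finite S" "j \<notin> S" "indep Z a S"
  shows "indep Z a (insert j S) \<longleftrightarrow> \<not> inspan Z a (colf Z j) S"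
proof
  assume ind: "indep Z a (insert j S)"
  show "\<not> inspan Z a (colf Z j) S"
  proof
    assume "inspan Z a (colf Z j) S"
    then obtain c where c: "\<forall>p<a. Z $$ (p, j) = (\<Sum>k\<in>S. c k * Z $$ (p, k))"
      unfolding inspan_def colf_def by blast
    define c' where "c' = c(j := -1)"
    have "\<forall>p<a. (\<Sum>k\<in>insert j S. c' k * Z $$ (p, k)) = 0"
    proof (intro allI impI)
      fix p assume p: "p < a"
      have "(\<Sum>k\<in>insert j S. c' k * Z $$ (p, k)) = c' j * Z $$ (p, j) + (\<Sum>k\<in>S. c' k * Z $$ (p, k))"
        using S by simp
      also have "(\<Sum>k\<in>S. c' k * Z $$ (p, k)) = (\<Sum>k\<in>S. c k * Z $$ (p, k))"
        using S(2) by (intro sum.cong) (auto simp: c'_def)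
      finally show "(\<Sum>k\<in>insert j S. c' k * Z $$ (p, k)) = 0" using c p by (simp add: c'_def)
    qed
    then have "c' j = 0" using ind unfolding indep_def by blast
    then show False by (simp add: c'_def)
  qed
next
  assume nsp: "\<not> inspan Z a (colf Z j) S"
  show "indep Z a (insert j S)" unfolding indep_def
  proof (rule ccontr)
    assume "\<not> (\<forall>c. (\<forall>p<a. (\<Sum>k\<in>insert j S. c k * Z $$ (p, k)) = 0) \<longrightarrow> (\<forall>k\<in>insert j S. c k = 0))"
    then obtain c j' where c: "\<forall>p<a. (\<Sum>k\<in>insert j S. c k * Z $$ (p, k)) = 0"
      and j': "j' \<in> insert j S" "c j' \<noteq> 0" by blast
    have c2: "\<forall>p<a. c j * Z $$ (p, j) + (\<Sum>k\<in>S. c k * Z $$ (p, k)) = 0" using c S by simp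
    show False
    proof (cases "c j = 0")
      case True
      then have "\<forall>p<a. (\<Sum>k\<in>S. c k * Z $$ (p, k)) = 0" using c2 by simp
      then have "\<forall>k\<in>S. c k = 0" using S(3) unfolding indep_def by blast
      then show False using j' True by auto
    next
      case False
      have "\<forall>p<a. colf Z j p = (\<Sum>k\<in>S. (- c k / c j) * Z $$ (p, k))"
      proof (intro allI impI)
        fix p assume p: "p < a"
        have "(\<Sum>k\<in>S. (- c k / c j) * Z $$ (p, k)) = (- 1 / c j) * (\<Sum>k\<in>S. c k * Z $$ (p, k))"
          by (simp add: sum_distrib_left)
        also have "(\<Sum>k\<in>S. c k * Z $$ (p, k)) = - (c j * Z $$ (p, j))" using c2[rule_format, OF p] by (simp add: add_eq_0_iff)
        finally show "colf Z j p = (\<Sum>k\<in>S. (- c k / c j) * Z $$ (p, k))"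
          using False by (simp add: colf_def)
      qed
      then have "inspan Z a (colf Z j) S" unfolding inspan_def by (rule exI[of _ "\<lambda>k. - c k / c j"])
      then show False using nsp by blast
    qed
  qed
qed


lemma fr_col_mono: "fr Z a b \<le> fr Z a (Suc b)"
proof -
  obtain S where S: "S \<subseteq> {..<b}" "indep Z a S" "card S = fr Z a b" using fr_obt by blast
  have "S \<subseteq> {..<Suc b}" using S(1) by auto
  then show ?thesis using fr_ge[of S "Suc b" Z a] S by simp
qed

lemma fr_col_inc: "fr Z a (Suc b) \<le> Suc (fr Z a b)"
proof -
  obtain T where T: "T \<subseteq> {..<Suc b}" "indep Z a T" "card T = fr Z a (Suc b)" using fr_obt by blast
  have fT: "finite T" using T(1) finite_subset by blast
  have "indep Z a (T - {b})" using indep_subset[OF fT T(2)] by blast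
  moreover have "T - {b} \<subseteq> {..<b}" using T(1) by auto
  ultimately have "card (T - {b}) \<le> fr Z a b" by (rule fr_ge[rotated])
  moreover have "card T \<le> Suc (card (T - {b}))"
  proof (cases "b \<in> T")
    case True then show ?thesis using fT by (simp add: card_Suc_Diff1)
  next
    case False then show ?thesis by simp
  qed
  ultimately show ?thesis using T(3) by simp
qed

lemma fr_row_mono: "fr Z a b \<le> fr Z (Suc a) b"
proof -
  obtain S where "S \<subseteq> {..<b}" "indep Z a S" "card S = fr Z a b" using fr_obt by blast
  then show ?thesis using fr_ge[of S b Z "Suc a"] indep_rows[of Z a S "Suc a"] by auto
qed

lemma fr_row_inc: "fr Z (Suc a) b \<le> Suc (fr Z a b)"
proof -
  obtain S where S: "S \<subseteq> {..<b}" "indep Z (Suc a) S" "card S = fr Z (Suc a) b" using fr_obt by blast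
  have fS: "finite S" using S(1) finite_subset by blast
  show ?thesis
  proof (cases "indep Z a S")
    case True
    then show ?thesis using fr_ge[OF S(1) True] S(3) by simp
  next
    case False
    then obtain c0 j0 where c0: "\<forall>p<a. (\<Sum>j\<in>S. c0 j * Z $$ (p, j)) = 0" and j0: "j0 \<in> S" "c0 j0 \<noteq> 0"
      unfolding indep_def by blast
    have ind: "indep Z a (S - {j0})"
    proof (rule ccontr)
      assume "\<not> indep Z a (S - {j0})"
      then obtain c j1 where c: "\<forall>p<a. (\<Sum>j\<in>S - {j0}. c j * Z $$ (p, j)) = 0"
        and j1: "j1 \<in> S - {j0}" "c j1 \<noteq> 0"
        unfolding indep_def by blast
      define cc where "cc = (\<lambda>j. if j = j0 then 0 else c j)"
      have ccS: "\<And>p. (\<Sum>j\<in>S. cc j * Z $$ (p, j)) = (\<Sum>j\<in>S - {j0}. c j * Z $$ (p, j))"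
      proof -
        fix p
        have "(\<Sum>j\<in>S. cc j * Z $$ (p, j)) = cc j0 * Z $$ (p, j0) + (\<Sum>j\<in>S - {j0}. cc j * Z $$ (p, j))"
          using sum.remove[OF fS j0(1)] by blast
        also have "(\<Sum>j\<in>S - {j0}. cc j * Z $$ (p, j)) = (\<Sum>j\<in>S - {j0}. c j * Z $$ (p, j))"
          by (rule sum.cong) (auto simp: cc_def)
        finally show "(\<Sum>j\<in>S. cc j * Z $$ (p, j)) = (\<Sum>j\<in>S - {j0}. c j * Z $$ (p, j))"
          by (simp add: cc_def)
      qed
      define s where "s = (\<Sum>j\<in>S - {j0}. c j * Z $$ (a, j))"
      define s0 where "s0 = (\<Sum>j\<in>S. c0 j * Z $$ (a, j))"
      show False
      proof (cases "s = 0")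
        case True
        have "\<forall>p<Suc a. (\<Sum>j\<in>S. cc j * Z $$ (p, j)) = 0"
        proof (intro allI impI)
          fix p assume "p < Suc a"
          then consider "p < a" | "p = a" by linarith
          then show "(\<Sum>j\<in>S. cc j * Z $$ (p, j)) = 0"
            by cases (use c True ccS in \<open>auto simp: s_def\<close>)
        qed
        then have "cc j1 = 0" using S(2) j1(1) unfolding indep_def by blast
        then show False using j1 by (simp add: cc_def)
      next
        case False
        define e where "e = (\<lambda>j. c0 j - (s0 / s) * cc j)"
        have es: "\<And>p. (\<Sum>j\<in>S. e j * Z $$ (p, j)) =
            (\<Sum>j\<in>S. c0 j * Z $$ (p, j)) - (s0 / s) * (\<Sum>j\<in>S. cc j * Z $$ (p, j))"
          unfolding e_def by (simp add: algebra_simps sum_subtractf sum_distrib_left)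
        have "\<forall>p<Suc a. (\<Sum>j\<in>S. e j * Z $$ (p, j)) = 0"
        proof (intro allI impI)
          fix p assume "p < Suc a"
          then consider "p < a" | "p = a" by linarith
          then show "(\<Sum>j\<in>S. e j * Z $$ (p, j)) = 0"
          proof cases
            case 1 then show ?thesis using es[of p] c0 c ccS by simp
          next
            case 2 then show ?thesis using es[of p] ccS[of a] False by (simp add: s_def[symmetric] s0_def[symmetric])
          qed
        qed
        then have "e j0 = 0" using S(2) j0(1) unfolding indep_def by blast
        then show False using j0 by (simp add: e_def cc_def)
      qed
    qed
    have "card (S - {j0}) \<le> fr Z a b" using fr_ge[OF _ ind] S(1) by auto
    moreover have "card S = Suc (card (S - {j0}))" using card_Suc_Diff1[OF fS j0(1)] by (rule sym)
    ultimately show ?thesis using S(3) by simp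
  qed
qed

lemma fr_key: "fr Z a (Suc b) = fr Z a b \<longleftrightarrow> inspan Z a (colf Z b) {..<b}"
proof
  assume eq: "fr Z a (Suc b) = fr Z a b"
  show "inspan Z a (colf Z b) {..<b}"
  proof (rule ccontr)
    assume nsp: "\<not> inspan Z a (colf Z b) {..<b}"
    obtain S where S: "S \<subseteq> {..<b}" "indep Z a S" "card S = fr Z a b" using fr_obt by blast
    have fS: "finite S" using S(1) finite_subset by blast
    have "\<not> inspan Z a (colf Z b) S" using nsp span_mono[of Z a "colf Z b" S "{..<b}"] S(1) by auto
    then have "indep Z a (insert b S)" using indep_insert[OF fS _ S(2)] S(1) by auto
    then have "card (insert b S) \<le> fr Z a (Suc b)" using S(1) by (intro fr_ge) auto
    moreover have "card (insert b S) = Suc (card S)" using fS S(1) by (subst card_insert_disjoint) auto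
    ultimately show False using eq S(3) by simp
  qed
next
  assume sp: "inspan Z a (colf Z b) {..<b}"
  obtain T where T: "T \<subseteq> {..<Suc b}" "indep Z a T" "card T = fr Z a (Suc b)" using fr_obt by blast
  have fT: "finite T" using T(1) finite_subset by blast
  have "fr Z a (Suc b) \<le> fr Z a b"
  proof (cases "b \<in> T")
    case False
    have "T \<subseteq> {..<b}"
    proof
      fix x assume "x \<in> T"
      then have "x < Suc b" "x \<noteq> b" using T(1) False by auto
      then show "x \<in> {..<b}" by simp
    qed
    then show ?thesis using fr_ge[OF _ T(2)] T(3) by simp
  next
    case True
    define T' where "T' = T - {b}"
    have fT': "finite T'" using fT by (simp add: T'_def)
    have T'b: "T' \<subseteq> {..<b}" using T(1) by (auto simp: T'_def)
    have iT': "indep Z a T'" using indep_subset[OF fT T(2)] by (auto simp: T'_def)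
    have TT': "T = insert b T'" using True by (auto simp: T'_def)
    have bT': "b \<notin> T'" by (simp add: T'_def)
    have "indep Z a (insert b T') \<longleftrightarrow> \<not> inspan Z a (colf Z b) T'" using indep_insert[OF fT' bT' iT'] .
    then have nT': "\<not> inspan Z a (colf Z b) T'" using T(2) TT' by simp
    have "\<exists>j<b. j \<notin> T' \<and> \<not> inspan Z a (colf Z j) T'"
    proof (rule ccontr)
      assume "\<not> (\<exists>j<b. j \<notin> T' \<and> \<not> inspan Z a (colf Z j) T')"
      then have "\<forall>j\<in>{..<b}. inspan Z a (colf Z j) T'"
      proof (intro ballI)
        fix j assume h: "\<not> (\<exists>j<b. j \<notin> T' \<and> \<not> inspan Z a (colf Z j) T')" and j: "j \<in> {..<b}"
        show "inspan Z a (colf Z j) T'"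
        proof (cases "j \<in> T'")
          case True then show ?thesis using span_self[of j T' Z a] True fT' by simp
        next
          case False then show ?thesis using h j by blast
        qed
      qed
      then have "inspan Z a (colf Z b) T'" using span_trans[of "{..<b}" Z a T' "colf Z b"] sp by simp
      then show False using nT' by simp
    qed
    then obtain j where j: "j < b" "j \<notin> T'" "\<not> inspan Z a (colf Z j) T'" by blast
    have "indep Z a (insert j T')" using indep_insert[OF fT' j(2) iT'] j(3) by simp
    then have "card (insert j T') \<le> fr Z a b" using T'b j(1) by (intro fr_ge) auto
    moreover have "card (insert j T') = card T"
    proof -
      have "card (insert j T') = Suc (card T')" using fT' j(2) by (rule card_insert_disjoint)
      moreover have "card (insert b T') = Suc (card T')" using fT' bT' by (rule card_insert_disjoint)
      ultimately show ?thesis using TT' by simp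
    qed
    ultimately show ?thesis using T(3) by simp
  qed
  then show "fr Z a (Suc b) = fr Z a b" using fr_col_mono[of Z a b] by simp
qed

lemma fr_a0: "fr Z a 0 = 0" using fr_le_b[of Z a 0] by simp

lemma fr_0b: "fr Z 0 b = 0"
proof -
  obtain S where S: "S \<subseteq> {..<b}" "indep Z 0 S" "card S = fr Z 0 b" using fr_obt by blast
  have "S = {}"
  proof (rule ccontr)
    assume "S \<noteq> {}"
    then obtain j where j: "j \<in> S" by blast
    have "(\<forall>p<0. (\<Sum>j\<in>S. (\<lambda>_. 1::'a) j * Z $$ (p, j)) = 0) \<longrightarrow> (\<forall>j\<in>S. (\<lambda>_. 1::'a) j = 0)"
      using S(2) unfolding indep_def by (rule spec)
    then show False using j by simp
  qed
  then show ?thesis using S(3) by simp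
qed

lemma fr_full:
  assumes inj: "\<forall>c. (\<forall>p<d. (\<Sum>j<d. c j * Z $$ (p, j)) = 0) \<longrightarrow> (\<forall>j<d. c j = 0)"
    and b: "b \<le> d"
  shows "fr Z d b = b"
proof -
  have "indep Z d {..<b}" unfolding indep_def
  proof (intro allI impI ballI)
    fix c j assume h: "\<forall>p<d. (\<Sum>j\<in>{..<b}. c j * Z $$ (p, j)) = 0" and j: "j \<in> {..<b}"
    define c' where "c' = (\<lambda>j. if j < b then c j else 0)"
    have "\<forall>p<d. (\<Sum>j<d. c' j * Z $$ (p, j)) = 0"
    proof (intro allI impI)
      fix p assume p: "p < d"
      have "(\<Sum>j<d. c' j * Z $$ (p, j)) = (\<Sum>j\<in>{..<b}. c' j * Z $$ (p, j))"
        by (rule sum.mono_neutral_right) (use b in \<open>auto simp: c'_def\<close>)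
      also have "\<dots> = (\<Sum>j\<in>{..<b}. c j * Z $$ (p, j))" by (simp add: c'_def)
      finally show "(\<Sum>j<d. c' j * Z $$ (p, j)) = 0" using h p by simp
    qed
    then have "\<forall>j<d. c' j = 0" using inj[rule_format, of c'] by blast
    then have "c' j = 0" using j b by auto
    then show "c j = 0" using j by (simp add: c'_def)
  qed
  then have "b \<le> fr Z d b" using fr_ge[of "{..<b}" b Z d] by simp
  then show ?thesis using fr_le_b[of Z d b] by simp
qed

lemma fr_dich: "fr Z a (Suc b) = fr Z a b \<or> fr Z a (Suc b) = Suc (fr Z a b)"
  using fr_col_mono[of Z a b] fr_col_inc[of Z a b] by linarith

lemma fr_up1: "fr Z a (Suc b) \<noteq> fr Z a b \<Longrightarrow> fr Z (Suc a) (Suc b) \<noteq> fr Z (Suc a) b"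
proof -
  assume h: "fr Z a (Suc b) \<noteq> fr Z a b"
  show ?thesis
  proof
    assume "fr Z (Suc a) (Suc b) = fr Z (Suc a) b"
    then have "inspan Z (Suc a) (colf Z b) {..<b}" using fr_key[of Z "Suc a" b] by simp
    then have "inspan Z a (colf Z b) {..<b}" using span_rows[of Z "Suc a" "colf Z b" "{..<b}" a] by simp
    then show False using h fr_key[of Z a b] by simp
  qed
qed

lemma fr_up: assumes "fr Z a (Suc b) \<noteq> fr Z a b" "a \<le> a'" shows "fr Z a' (Suc b) \<noteq> fr Z a' b"
  using assms(2)
proof (induction a' rule: dec_induct)
  case base then show ?case using assms(1) by simp
next
  case (step n) then show ?case using fr_up1 by blast
qed

locale fullrank =
  fixes Z :: "'a::field mat" and d :: nat
  assumes inj: "\<forall>c. (\<forall>p<d. (\<Sum>j<d. c j * Z $$ (p, j)) = 0) \<longrightarrow> (\<forall>j<d. c j = 0)"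
begin

definition rho :: "nat \<Rightarrow> nat" where
  "rho b = (LEAST a. fr Z (Suc a) (Suc b) \<noteq> fr Z (Suc a) b)"

lemma rho_props:
  assumes b: "b < d"
  shows "rho b < d" "\<And>a. fr Z a (Suc b) \<noteq> fr Z a b \<longleftrightarrow> rho b < a"
proof -
  have fd: "fr Z d (Suc b) \<noteq> fr Z d b" using fr_full[OF inj] b by simp
  have ex: "fr Z (Suc (d - 1)) (Suc b) \<noteq> fr Z (Suc (d - 1)) b" using fd b by simp
  have L: "fr Z (Suc (rho b)) (Suc b) \<noteq> fr Z (Suc (rho b)) b"
    unfolding rho_def by (rule LeastI[of _ "d - 1"]) (rule ex)
  have "rho b \<le> d - 1" unfolding rho_def by (rule Least_le) (rule ex)
  then show "rho b < d" using b by simp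
  fix a
  show "fr Z a (Suc b) \<noteq> fr Z a b \<longleftrightarrow> rho b < a"
  proof
    assume u: "fr Z a (Suc b) \<noteq> fr Z a b"
    show "rho b < a"
    proof (rule ccontr)
      assume "\<not> rho b < a"
      then have ar: "a \<le> rho b" by simp
      show False
      proof (cases a)
        case 0 then show False using u fr_0b[of Z] by simp
      next
        case (Suc a')
        then have "a' < rho b" using ar by simp
        then have "\<not> (fr Z (Suc a') (Suc b) \<noteq> fr Z (Suc a') b)" unfolding rho_def by (rule not_less_Least)
        then show False using u Suc by simp
      qed
    qed
  next
    assume "rho b < a"
    then show "fr Z a (Suc b) \<noteq> fr Z a b" using fr_up[OF L] by simp
  qed
qed

lemma fr_count:
  assumes "b \<le> d" shows "fr Z a b = card {q. q < b \<and> rho q < a}"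
  using assms
proof (induction b)
  case 0 then show ?case using fr_a0 by simp
next
  case (Suc b)
  then have b: "b < d" by simp
  have IH: "fr Z a b = card {q. q < b \<and> rho q < a}" using Suc by simp
  show ?case
  proof (cases "rho b < a")
    case True
    then have "fr Z a (Suc b) = Suc (fr Z a b)" using rho_props(2)[OF b, of a] fr_dich[of Z a b] by auto
    moreover have "{q. q < Suc b \<and> rho q < a} = insert b {q. q < b \<and> rho q < a}" using True by auto
    ultimately show ?thesis using IH by simp
  next
    case False
    then have "fr Z a (Suc b) = fr Z a b" using rho_props(2)[OF b, of a] by auto
    moreover have "{q. q < Suc b \<and> rho q < a} = {q. q < b \<and> rho q < a}" using False less_Suc_eq by auto
    ultimately show ?thesis using IH by simp
  qed
qed

lemma rho_inj: "inj_on rho {..<d}"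
proof (rule inj_onI, rule ccontr)
  fix b1 b2 assume b1: "b1 \<in> {..<d}" and b2: "b2 \<in> {..<d}" and eq: "rho b1 = rho b2" and ne: "b1 \<noteq> b2"
  define r where "r = rho b1"
  have rd: "r < d" using rho_props(1) b1 by (simp add: r_def)
  have "fr Z (Suc r) d = card {q. q < d \<and> rho q < Suc r}" using fr_count by simp
  moreover have "fr Z r d = card {q. q < d \<and> rho q < r}" using fr_count by simp
  moreover have "{q. q < d \<and> rho q < Suc r} \<supseteq> insert b1 (insert b2 {q. q < d \<and> rho q < r})"
    using b1 b2 eq by (auto simp: r_def)
  moreover have "card (insert b1 (insert b2 {q. q < d \<and> rho q < r})) = Suc (Suc (card {q. q < d \<and> rho q < r}))"
    using ne eq by (simp add: r_def)
  moreover have "card (insert b1 (insert b2 {q. q < d \<and> rho q < r})) \<le> card {q. q < d \<and> rho q < Suc r}"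
    by (rule card_mono) (use calculation(3) in auto)
  ultimately have "Suc (Suc (fr Z r d)) \<le> fr Z (Suc r) d" by simp
  then show False using fr_row_inc[of Z r d] by simp
qed

definition rho' where "rho' q = (if q < d then rho q else q)"

lemma rho'_perm: "rho' permutes {..<d}"
proof (rule bij_imp_permutes)
  have inj': "inj_on rho' {..<d}" using rho_inj by (simp add: rho'_def inj_on_def)
  have "rho' ` {..<d} \<subseteq> {..<d}" using rho_props(1) by (auto simp: rho'_def)
  then have "rho' ` {..<d} = {..<d}" using endo_inj_surj[OF _ _ inj'] by simp
  then show "bij_betw rho' {..<d} {..<d}" using inj' by (simp add: bij_betw_def)
  show "\<And>x. x \<notin> {..<d} \<Longrightarrow> rho' x = x" by (simp add: rho'_def)
qed

theorem perm_exists: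
  "\<exists>\<sigma>. \<sigma> permutes {..<d} \<and> (\<forall>a\<le>d. \<forall>b\<le>d. fr Z a b = card {p. p < a \<and> \<sigma> p < b})"
proof (intro exI conjI allI impI)
  let ?s = "inv_into UNIV rho'"
  show "?s permutes {..<d}" using permutes_inv[OF rho'_perm] .
  fix a b assume a: "a \<le> d" and b: "b \<le> d"
  have "rho' ` {q. q < b \<and> rho q < a} = {p. p < a \<and> ?s p < b}"
  proof (rule Set.set_eqI, rule iffI)
    fix p assume "p \<in> rho' ` {q. q < b \<and> rho q < a}"
    then obtain q where q: "q < b" "rho q < a" "p = rho' q" by auto
    then have "?s p = q" using permutes_inverses(2)[OF rho'_perm] by simp
    then show "p \<in> {p. p < a \<and> ?s p < b}" using q b by (auto simp: rho'_def)
  next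
    fix p assume p: "p \<in> {p. p < a \<and> ?s p < b}"
    have e: "rho' (?s p) = p" using permutes_inverses(1)[OF rho'_perm] by simp
    have sb: "?s p < b" using p by simp
    then have "rho (?s p) = p" using e b by (simp add: rho'_def)
    then have "?s p \<in> {q. q < b \<and> rho q < a}" using sb p by simp
    then show "p \<in> rho' ` {q. q < b \<and> rho q < a}" using e by (metis image_eqI)
  qed
  moreover have "inj_on rho' {q. q < b \<and> rho q < a}"
    by (rule permutes_inj_on[OF rho'_perm])
  ultimately have "card {p. p < a \<and> ?s p < b} = card {q. q < b \<and> rho q < a}"
    using card_image by fastforce
  then show "fr Z a b = card {p. p < a \<and> ?s p < b}" using fr_count[OF b] by simp
qed

end

lemma indep_inj:
  assumes A: "A \<in> carrier_mat a b" and S: "S \<subseteq> {..<b}" and ind: "indep A a S"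
  shows "inj_on (col A) S"
proof (rule inj_onI, rule ccontr)
  fix i j assume i: "i \<in> S" and j: "j \<in> S" and eq: "col A i = col A j" and ne: "i \<noteq> j"
  define c where "c = (\<lambda>k. (if k = i then 1 else 0) - (if k = j then (1::'a) else 0))"
  have "\<forall>p<a. (\<Sum>k\<in>S. c k * A $$ (p, k)) = 0"
  proof (intro allI impI)
    fix p assume p: "p < a"
    have ib: "i < b" "j < b" using i j S by auto
    have "A $$ (p, i) = col A i $ p" using p A ib by simp
    also have "\<dots> = col A j $ p" using eq by simp
    also have "\<dots> = A $$ (p, j)" using p A ib by simp
    finally have "A $$ (p, i) = A $$ (p, j)" .
    moreover have "(\<Sum>k\<in>S. c k * A $$ (p, k)) = (\<Sum>k\<in>S. (if k = i then A $$ (p, k) else 0) - (if k = j then A $$ (p, k) else 0))"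
      by (rule sum.cong) (auto simp: c_def)
    then have "(\<Sum>k\<in>S. c k * A $$ (p, k)) = (\<Sum>k\<in>S. (if k = i then A $$ (p, k) else 0)) - (\<Sum>k\<in>S. (if k = j then A $$ (p, k) else 0))"
      by (simp add: sum_subtractf)
    ultimately show "(\<Sum>k\<in>S. c k * A $$ (p, k)) = 0" using i j S by (simp add: sum.delta finite_subset)
  qed
  then have "c i = 0" using ind i unfolding indep_def by blast
  then show False using ne by (simp add: c_def)
qed

lemma rank_fr:
  fixes A :: "'a::field mat"
  assumes A: "A \<in> carrier_mat a b"
  shows "mrank A = fr A a b"
proof -
  have ra: "dim_row A = a" using A by simp
  have colc: "\<And>j. col A j \<in> carrier_vec a" using ra by (intro carrier_vecI) simp
  have cb: "dim_col A = b" using A by simp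
  have colsA: "set (cols A) = col A ` {..<b}" unfolding cols_def cb by (simp add: atLeast0LessThan)
  have colS: "\<And>S. col A ` S \<subseteq> carrier_vec a" using colc by blast
  interpret V: vec_space "TYPE('a)" a .
  have sumeq: "\<And>S (c :: 'a vec \<Rightarrow> 'a) p. S \<subseteq> {..<b} \<Longrightarrow> inj_on (col A) S \<Longrightarrow> p < a \<Longrightarrow>
      V.lincomb c (col A ` S) $ p = (\<Sum>j\<in>S. c (col A j) * A $$ (p, j))"
  proof -
    fix S and c :: "'a vec \<Rightarrow> 'a" and p assume S: "S \<subseteq> {..<b}" and inj: "inj_on (col A) S" and p: "p < a"
    have "V.lincomb c (col A ` S) $ p = (\<Sum>x\<in>col A ` S. c x * x $ p)"
      by (rule V.lincomb_index[OF p colS])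
    also have "\<dots> = (\<Sum>j\<in>S. c (col A j) * col A j $ p)" by (rule sum.reindex[OF inj, unfolded comp_def])
    also have "\<dots> = (\<Sum>j\<in>S. c (col A j) * A $$ (p, j))"
    proof (rule sum.cong[OF refl])
      fix x assume "x \<in> S"
      then have "x < dim_col A" using S cb by auto
      then show "c (col A x) * col A x $ p = c (col A x) * A $$ (p, x)" using p ra by simp
    qed
    finally show "V.lincomb c (col A ` S) $ p = (\<Sum>j\<in>S. c (col A j) * A $$ (p, j))" .
  qed
  have equiv: "\<And>S. S \<subseteq> {..<b} \<Longrightarrow> indep A a S \<longleftrightarrow> inj_on (col A) S \<and> V.lin_indpt (col A ` S)"
  proof
    fix S assume S: "S \<subseteq> {..<b}" and ind: "indep A a S"
    have inj: "inj_on (col A) S" using indep_inj[OF A S ind] .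
    have fS: "finite S" using S finite_subset by blast
    have "V.lin_indpt (col A ` S)"
    proof (rule V.finite_lin_indpt2)
      show "finite (col A ` S)" using fS by simp
      show "col A ` S \<subseteq> carrier_vec a" by (rule colS)
      fix c assume "True" and lc: "V.lincomb c (col A ` S) = 0\<^sub>v a"
      have "\<forall>p<a. (\<Sum>j\<in>S. (c \<circ> col A) j * A $$ (p, j)) = 0"
      proof (intro allI impI)
        fix p assume p: "p < a"
        have "V.lincomb c (col A ` S) $ p = 0" using lc p by simp
        then show "(\<Sum>j\<in>S. (c \<circ> col A) j * A $$ (p, j)) = 0" using sumeq[OF S inj p] by simp
      qed
      moreover have "(\<forall>p<a. (\<Sum>j\<in>S. (c \<circ> col A) j * A $$ (p, j)) = 0) \<longrightarrow> (\<forall>j\<in>S. (c \<circ> col A) j = 0)"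
        using ind unfolding indep_def by (rule spec)
      ultimately have "\<forall>j\<in>S. (c \<circ> col A) j = 0" by blast
      then show "\<forall>v\<in>col A ` S. c v = 0" by simp
    qed
    then show "inj_on (col A) S \<and> V.lin_indpt (col A ` S)" using inj by simp
  next
    fix S assume S: "S \<subseteq> {..<b}" and h: "inj_on (col A) S \<and> V.lin_indpt (col A ` S)"
    have fS: "finite S" using S finite_subset by blast
    show "indep A a S" unfolding indep_def
    proof (intro allI impI ballI, rule ccontr)
      fix c j assume z: "\<forall>p<a. (\<Sum>j\<in>S. c j * A $$ (p, j)) = 0" and j: "j \<in> S" and cj: "c j \<noteq> 0"
      define c' where "c' = (\<lambda>x. c (inv_into S (col A) x))"
      have cc: "\<And>k. k \<in> S \<Longrightarrow> c' (col A k) = c k" using h by (simp add: c'_def)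
      have "V.lincomb c' (col A ` S) = 0\<^sub>v a"
      proof (rule eq_vecI)
        show "dim_vec (V.lincomb c' (col A ` S)) = dim_vec (0\<^sub>v a)"
          using V.lincomb_dim[OF finite_imageI[OF fS] colS[of S], of c'] by simp
        fix p assume "p < dim_vec (0\<^sub>v a)"
        then have p: "p < a" by simp
        have "V.lincomb c' (col A ` S) $ p = (\<Sum>k\<in>S. c' (col A k) * A $$ (p, k))" using sumeq[OF S _ p] h by blast
        also have "\<dots> = (\<Sum>k\<in>S. c k * A $$ (p, k))" by (rule sum.cong) (auto simp: cc)
        finally show "V.lincomb c' (col A ` S) $ p = 0\<^sub>v a $ p" using z p by simp
      qed
      have "V.lin_dep (col A ` S)"
      proof (rule V.lin_dep_crit[where A="col A ` S" and S="col A ` S" and a=c' and v="col A j"])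
        show "finite (col A ` S)" using fS by simp
        show "col A ` S \<subseteq> col A ` S" by simp
        show "True" ..
        show "col A j \<in> col A ` S" using j by simp
        show "c' (col A j) \<noteq> 0" using cc[OF j] cj by simp
        show "V.lincomb c' (col A ` S) = 0\<^sub>v a" by fact
      qed
      then show False using h by simp
    qed
  qed
  have le1: "V.rank A \<le> fr A a b"
  proof -
    define P where "P = (\<lambda>T. T \<subseteq> set (cols A) \<and> V.lin_indpt T)"
    have P0: "P {}" unfolding P_def V.lin_dep_def by simp
    have fin: "finite (set (cols A))" by simp
    have sub: "\<And>B. P B \<Longrightarrow> B \<subseteq> set (cols A)" unfolding P_def by simp
    from maximal_exists_superset[of "set (cols A)" P "{}", OF fin sub P0] obtain T where T: "finite T" "maximal T P" by blast
    have rT: "V.rank A = card T" using V.rank_card_indpt[OF A T(2)[unfolded P_def]] .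
    have "P T" using T(2) unfolding maximal_def by blast
    then have "T \<subseteq> col A ` {..<b}" "V.lin_indpt T" using colsA unfolding P_def by simp_all
    from subset_image_inj[THEN iffD1, OF this(1)] obtain U where U: "U \<subseteq> {..<b}" "inj_on (col A) U" "T = col A ` U"
      by blast
    have "indep A a U" using equiv[OF U(1)] U \<open>V.lin_indpt T\<close> by simp
    then have "card U \<le> fr A a b" using fr_ge U(1) by blast
    moreover have "card T = card U" using card_image[OF U(2)] U(3) by simp
    ultimately show ?thesis using rT by simp
  qed
  have le2: "fr A a b \<le> V.rank A"
  proof -
    obtain S where S: "S \<subseteq> {..<b}" "indep A a S" "card S = fr A a b" using fr_obt by blast
    have h: "inj_on (col A) S" "V.lin_indpt (col A ` S)" using equiv[OF S(1)] S(2) by auto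
    have "card (col A ` S) \<le> V.rank A"
      by (rule V.rank_ge_card_indpt[OF A]) (use S(1) colsA h in auto)
    then show ?thesis using S(3) card_image[OF h(1)] by simp
  qed
  show ?thesis unfolding mrank_def ra using le1 le2 by simp
qed

lemma fr_cong:
  assumes "\<forall>p<a. \<forall>j<b. A $$ (p, j) = Z $$ (p, j)"
  shows "fr A a b = fr Z a b"
proof -
  have "\<And>S. S \<subseteq> {..<b} \<Longrightarrow> indep A a S = indep Z a S"
  proof -
    fix S assume S: "S \<subseteq> {..<b}"
    have "\<And>c p. p < a \<Longrightarrow> (\<Sum>j\<in>S. c j * A $$ (p, j)) = (\<Sum>j\<in>S. c j * Z $$ (p, j))"
      by (rule sum.cong) (use assms S in auto)
    then show "indep A a S = indep Z a S" unfolding indep_def by simp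
  qed
  then have "{S. S \<subseteq> {..<b} \<and> indep A a S} = {S. S \<subseteq> {..<b} \<and> indep Z a S}" by blast
  then show ?thesis unfolding fr_def by simp
qed

lemma mrank_sub:
  fixes Z :: "'a::field mat"
  assumes a: "a \<le> dim_row Z" and b: "b \<le> dim_col Z"
  shows "mrank (submatrix Z {..<a} {..<b}) = fr Z a b"
proof -
  have r: "card {i. i < dim_row Z \<and> i \<in> {..<a}} = a"
  proof -
    have "{i. i < dim_row Z \<and> i \<in> {..<a}} = {..<a}" using a by auto
    then show ?thesis by simp
  qed
  have c: "card {i. i < dim_col Z \<and> i \<in> {..<b}} = b"
  proof -
    have "{i. i < dim_col Z \<and> i \<in> {..<b}} = {..<b}" using b by auto
    then show ?thesis by simp
  qed
  have pk: "\<And>n i. i < n \<Longrightarrow> pick {..<n} i = i"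
  proof -
    fix n i :: nat assume "i < n"
    then have "pick {..<n} (card {x\<in>{..<n}. x < i}) = i" by (intro pick_card_in_set) simp
    moreover have "{x\<in>{..<n}. x < i} = {..<i}" using \<open>i < n\<close> by auto
    ultimately show "pick {..<n} i = i" by simp
  qed
  let ?A = "submatrix Z {..<a} {..<b}"
  have A: "?A \<in> carrier_mat a b" using dim_submatrix[of Z "{..<a}" "{..<b}"] r c by (intro carrier_matI) simp_all
  have "\<forall>p<a. \<forall>j<b. ?A $$ (p, j) = Z $$ (p, j)"
    using submatrix_index[of _ Z "{..<a}" _ "{..<b}"] r c pk by simp
  then show ?thesis using rank_fr[OF A] fr_cong by simp
qed

lemma zeta_dims:
  "dim_row (zeta n dx dy V) = dX n dx + dY n dy" "dim_col (zeta n dx dy V) = dX n dx + dY n dy"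
  unfolding zeta_def M_Q_def by simp_all

lemma zeta_inj:
  fixes V :: "(nat \<Rightarrow> 'a::field mat) \<times> (nat \<Rightarrow> 'a mat)"
  shows "\<forall>c. (\<forall>p<dX n dx + dY n dy. (\<Sum>j<dX n dx + dY n dy. c j * zeta n dx dy V $$ (p, j)) = 0)
     \<longrightarrow> (\<forall>j<dX n dx + dY n dy. c j = 0)"
proof (intro allI impI)
  fix c :: "nat \<Rightarrow> 'a" and j
  assume h: "\<forall>p<dX n dx + dY n dy. (\<Sum>j<dX n dx + dY n dy. c j * zeta n dx dy V $$ (p, j)) = 0"
    and j: "j < dX n dx + dY n dy"
  define X where "X = dX n dx"
  define Y where "Y = dY n dy"
  define M where "M = M_Q n dx dy V"
  have Mc: "dim_row M = Y" "dim_col M = X" unfolding M_def M_Q_def X_def Y_def by simp_all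
  have ent: "\<And>p q. p < X + Y \<Longrightarrow> q < X + Y \<Longrightarrow> zeta n dx dy V $$ (p, q) =
     (if p < Y then (if q < X then M $$ (p, q) else (if p = q - X then 1 else 0))
      else (if q < X then (if p - Y = q then 1 else 0) else 0))"
    unfolding zeta_def M_def[symmetric] using Mc by (auto simp: X_def Y_def)
  have h': "\<And>p. p < X + Y \<Longrightarrow> (\<Sum>q<X + Y. c q * zeta n dx dy V $$ (p, q)) = 0"
    using h unfolding X_def Y_def by simp
  have cX: "\<And>k. k < X \<Longrightarrow> c k = 0"
  proof -
    fix k assume k: "k < X"
    have "(\<Sum>q<X + Y. c q * zeta n dx dy V $$ (Y + k, q)) = (\<Sum>q<X + Y. if q = k then c q else 0)"
      by (rule sum.cong[OF refl]) (use k in \<open>auto simp: ent\<close>)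
    also have "\<dots> = c k" using k by (simp add: sum.delta)
    finally show "c k = 0" using h'[of "Y + k"] k by simp
  qed
  have cY: "\<And>k. k < Y \<Longrightarrow> c (X + k) = 0"
  proof -
    fix k assume k: "k < Y"
    have "(\<Sum>q<X + Y. c q * zeta n dx dy V $$ (k, q)) = (\<Sum>q<X + Y. if q = X + k then c q else 0)"
      by (rule sum.cong[OF refl]) (use k cX in \<open>auto simp: ent\<close>)
    also have "\<dots> = c (X + k)" using k by (simp add: sum.delta)
    finally show "c (X + k) = 0" using h'[of k] k by simp
  qed
  show "c j = 0"
  proof (cases "j < X")
    case True then show ?thesis using cX by simp
  next
    case False
    then have "j = X + (j - X)" "j - X < Y" using j by (auto simp: X_def Y_def)
    then show ?thesis using cY by metis
  qed
qed


lemma roff_mono: "mono (roff n dx dy)"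
  unfolding roff_def by (rule monoI, rule sum_mono2) auto
lemma coff_mono: "mono (coff n dx dy)"
  unfolding coff_def by (rule monoI, rule sum_mono2) auto
lemma roff_1: "roff n dx dy 1 = 0" unfolding roff_def by simp
lemma coff_1: "coff n dx dy 1 = 0" unfolding coff_def by simp
lemma roff_Suc: "1 \<le> k \<Longrightarrow> roff n dx dy (Suc k) = roff n dx dy k + rsz n dx dy k"
  unfolding roff_def by simp
lemma coff_Suc: "1 \<le> k \<Longrightarrow> coff n dx dy (Suc k) = coff n dx dy k + csz n dx dy k"
  unfolding coff_def by simp
lemma rblock_blk: "1 \<le> k \<Longrightarrow> rblock n dx dy k = blk (roff n dx dy) k"
  unfolding rblock_def blk_def using roff_Suc by simp
lemma cblock_blk: "1 \<le> k \<Longrightarrow> cblock n dx dy k = blk (coff n dx dy) k"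
  unfolding cblock_def blk_def using coff_Suc by simp

lemma roff_end: "roff n dx dy (Suc (2 * n + 1)) = dX n dx + dY n dy"
proof -
  have "roff n dx dy (Suc (2 * n + 1)) = (\<Sum>m\<in>{1..<n+2}. rsz n dx dy m) + (\<Sum>m\<in>{n+2..<2*n+2}. rsz n dx dy m)"
    unfolding roff_def by (subst sum.atLeastLessThan_concat) auto
  also have "(\<Sum>m\<in>{1..<n+2}. rsz n dx dy m) = (\<Sum>i\<in>{0..n}. dy i)"
    by (rule sum.reindex_bij_witness[of _ "\<lambda>i. i + 1" "\<lambda>m. m - 1"]) (auto simp: rsz_def)
  also have "(\<Sum>m\<in>{n+2..<2*n+2}. rsz n dx dy m) = (\<Sum>i\<in>{1..n}. dx i)"
    by (rule sum.reindex_bij_witness[of _ "\<lambda>i. 2*n+2-i" "\<lambda>m. 2*n+2-m"]) (auto simp: rsz_def)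
  finally show ?thesis unfolding dX_def dY_def by simp
qed

lemma coff_end: "coff n dx dy (Suc (2 * n + 1)) = dX n dx + dY n dy"
proof -
  have "coff n dx dy (Suc (2 * n + 1)) = (\<Sum>m\<in>{1..<n+1}. csz n dx dy m) + (\<Sum>m\<in>{n+1..<2*n+2}. csz n dx dy m)"
    unfolding coff_def by (subst sum.atLeastLessThan_concat) auto
  also have "(\<Sum>m\<in>{1..<n+1}. csz n dx dy m) = (\<Sum>i\<in>{1..n}. dx i)"
    by (rule sum.reindex_bij_witness[of _ "\<lambda>i. n+1-i" "\<lambda>m. n+1-m"]) (auto simp: csz_def)
  also have "(\<Sum>m\<in>{n+1..<2*n+2}. csz n dx dy m) = (\<Sum>i\<in>{0..n}. dy i)"
    by (rule sum.reindex_bij_witness[of _ "\<lambda>i. i + n + 1" "\<lambda>m. m - n - 1"]) (auto simp: csz_def)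
  finally show ?thesis unfolding dX_def dY_def by simp
qed

lemma blocks_inst: "blocks (dX n dx + dY n dy) (2 * n + 1) (roff n dx dy) (coff n dx dy)"
  unfolding blocks_def using roff_mono coff_mono roff_1 coff_1 roff_end coff_end by simp


lemma rect_count:
  fixes \<sigma> :: "nat \<Rightarrow> nat" and a1 a2 b1 b2 :: nat
  assumes "a1 \<le> a2" "b1 \<le> b2"
  shows "card {p. a1 \<le> p \<and> p < a2 \<and> b1 \<le> \<sigma> p \<and> \<sigma> p < b2} + card {p. p < a1 \<and> \<sigma> p < b2}
     + card {p. p < a2 \<and> \<sigma> p < b1} = card {p. p < a2 \<and> \<sigma> p < b2} + card {p. p < a1 \<and> \<sigma> p < b1}"
proof -
  define X1 where "X1 = {p. p < a1 \<and> \<sigma> p < b2}"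
  define X2 where "X2 = {p. a1 \<le> p \<and> p < a2 \<and> \<sigma> p < b1}"
  define X3 where "X3 = {p. a1 \<le> p \<and> p < a2 \<and> b1 \<le> \<sigma> p \<and> \<sigma> p < b2}"
  define Y1 where "Y1 = {p. p < a1 \<and> \<sigma> p < b1}"
  have f1: "finite X1" by (rule finite_subset[of _ "{..<a2}"]) (use assms in \<open>auto simp: X1_def\<close>)
  have f2: "finite X2" by (rule finite_subset[of _ "{..<a2}"]) (use assms in \<open>auto simp: X2_def\<close>)
  have f3: "finite X3" by (rule finite_subset[of _ "{..<a2}"]) (use assms in \<open>auto simp: X3_def\<close>)
  have f4: "finite Y1" by (rule finite_subset[of _ "{..<a2}"]) (use assms in \<open>auto simp: Y1_def\<close>)
  note f = f1 f2 f3 f4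
  have e1: "{p. p < a2 \<and> \<sigma> p < b2} = X1 \<union> (X2 \<union> X3)"
    using assms by (auto simp: X1_def X2_def X3_def)
  have e2: "{p. p < a2 \<and> \<sigma> p < b1} = Y1 \<union> X2"
    using assms by (auto simp: X2_def Y1_def)
  have c0: "card (X2 \<union> X3) = card X2 + card X3"
    by (rule card_Un_disjoint[OF f2 f3]) (auto simp: X2_def X3_def)
  have c1: "card (X1 \<union> (X2 \<union> X3)) = card X1 + (card X2 + card X3)"
    unfolding c0[symmetric] by (rule card_Un_disjoint[OF f1]) (use f2 f3 in \<open>auto simp: X1_def X2_def X3_def\<close>)
  have c2: "card (Y1 \<union> X2) = card Y1 + card X2"
    by (rule card_Un_disjoint[OF f4 f2]) (auto simp: X2_def Y1_def)
  show ?thesis unfolding e1 e2 c1 c2 by (simp add: X1_def X3_def Y1_def)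
qed

context blocks
begin

lemma bc_rect: "bc \<sigma> i j = card {p. R i \<le> p \<and> p < R (Suc i) \<and> C j \<le> \<sigma> p \<and> \<sigma> p < C (Suc j)}"
  unfolding bc_def blk_def by (rule arg_cong[of _ _ card]) auto

lemma pm_ones:
  assumes Pc: "P \<in> carrier_mat d d" and ent: "\<forall>p<d. \<forall>q<d. P $$ (p, q) = (if \<sigma> p = q then 1 else (0::'a::field))"
    and i: "i \<in> {1..m}" and j: "j \<in> {1..m}"
  shows "card {(p, q). p \<in> blk R i \<and> q \<in> blk C j \<and> P $$ (p, q) = 1} = bc \<sigma> i j"
proof -
  have Rid: "R (Suc i) \<le> d" using i R_le_d by simp
  have Cjd: "C (Suc j) \<le> d" using j C_le_d by simp
  have "{(p, q). p \<in> blk R i \<and> q \<in> blk C j \<and> P $$ (p, q) = 1} = (\<lambda>p. (p, \<sigma> p)) ` {p\<in>blk R i. \<sigma> p \<in> blk C j}"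
  proof (rule Set.set_eqI, rule iffI)
    fix x assume "x \<in> {(p, q). p \<in> blk R i \<and> q \<in> blk C j \<and> P $$ (p, q) = 1}"
    then obtain p q where x: "x = (p, q)" "p \<in> blk R i" "q \<in> blk C j" "P $$ (p, q) = 1" by blast
    have "p < d" "q < d" using x Rid Cjd by (auto simp: blk_def)
    then have "\<sigma> p = q" using x(4) ent by (metis zero_neq_one)
    then show "x \<in> (\<lambda>p. (p, \<sigma> p)) ` {p\<in>blk R i. \<sigma> p \<in> blk C j}" using x by auto
  next
    fix x assume "x \<in> (\<lambda>p. (p, \<sigma> p)) ` {p\<in>blk R i. \<sigma> p \<in> blk C j}"
    then obtain p where x: "x = (p, \<sigma> p)" "p \<in> blk R i" "\<sigma> p \<in> blk C j" by blast
    have "p < d" "\<sigma> p < d" using x Rid Cjd by (auto simp: blk_def)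
    then have "P $$ (p, \<sigma> p) = 1" using ent by simp
    then show "x \<in> {(p, q). p \<in> blk R i \<and> q \<in> blk C j \<and> P $$ (p, q) = 1}" using x by simp
  qed
  moreover have "inj_on (\<lambda>p. (p, \<sigma> p)) {p\<in>blk R i. \<sigma> p \<in> blk C j}" by (rule inj_onI) simp
  ultimately show ?thesis unfolding bc_def by (simp add: card_image)
qed

lemma pm_rows:
  assumes ent: "\<forall>p<d. \<forall>q<d. P $$ (p, q) = (if \<sigma> p = q then 1 else (0::'a::field))"
    and perm: "\<sigma> permutes {..<d}"
  shows "(\<forall>k\<in>{1..m}. \<forall>p1 q1 p2 q2. p1 \<in> blk R k \<and> p2 \<in> blk R k \<and> q1 < d \<and> q2 < d \<and>
      P $$ (p1, q1) = 1 \<and> P $$ (p2, q2) = 1 \<and> p1 < p2 \<longrightarrow> q1 < q2) \<longleftrightarrow> nwr \<sigma>"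
proof
  assume h: "\<forall>k\<in>{1..m}. \<forall>p1 q1 p2 q2. p1 \<in> blk R k \<and> p2 \<in> blk R k \<and> q1 < d \<and> q2 < d \<and>
      P $$ (p1, q1) = 1 \<and> P $$ (p2, q2) = 1 \<and> p1 < p2 \<longrightarrow> q1 < q2"
  show "nwr \<sigma>" unfolding nwr_def
  proof (intro ballI allI impI)
    fix k p1 p2 assume k: "k \<in> {1..m}" and p: "p1 \<in> blk R k" "p2 \<in> blk R k" "p1 < p2"
    have "R (Suc k) \<le> d" using k R_le_d by simp
    then have pd: "p1 < d" "p2 < d" using p by (auto simp: blk_def)
    then have sd: "\<sigma> p1 < d" "\<sigma> p2 < d" using perm permutes_in_image by fastforce+
    have "P $$ (p1, \<sigma> p1) = 1" "P $$ (p2, \<sigma> p2) = 1" using ent pd sd by simp_all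
    then show "\<sigma> p1 < \<sigma> p2" using h k p sd by blast
  qed
next
  assume h: "nwr \<sigma>"
  show "\<forall>k\<in>{1..m}. \<forall>p1 q1 p2 q2. p1 \<in> blk R k \<and> p2 \<in> blk R k \<and> q1 < d \<and> q2 < d \<and>
      P $$ (p1, q1) = 1 \<and> P $$ (p2, q2) = 1 \<and> p1 < p2 \<longrightarrow> q1 < q2"
  proof (intro ballI allI impI)
    fix k p1 q1 p2 q2 assume k: "k \<in> {1..m}" and a: "p1 \<in> blk R k \<and> p2 \<in> blk R k \<and> q1 < d \<and> q2 < d \<and>
      P $$ (p1, q1) = 1 \<and> P $$ (p2, q2) = 1 \<and> p1 < p2"
    have "R (Suc k) \<le> d" using k R_le_d by simp
    then have pd: "p1 < d" "p2 < d" using a by (auto simp: blk_def)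
    have "\<sigma> p1 = q1" "\<sigma> p2 = q2" using a pd ent by (metis zero_neq_one)+
    then show "q1 < q2" using h k a unfolding nwr_def by blast
  qed
qed

lemma pm_cols:
  assumes ent: "\<forall>p<d. \<forall>q<d. P $$ (p, q) = (if \<sigma> p = q then 1 else (0::'a::field))"
    and perm: "\<sigma> permutes {..<d}"
  shows "(\<forall>k\<in>{1..m}. \<forall>p1 q1 p2 q2. q1 \<in> blk C k \<and> q2 \<in> blk C k \<and> p1 < d \<and> p2 < d \<and>
      P $$ (p1, q1) = 1 \<and> P $$ (p2, q2) = 1 \<and> q1 < q2 \<longrightarrow> p1 < p2) \<longleftrightarrow> nwc \<sigma>"
proof
  assume h: "\<forall>k\<in>{1..m}. \<forall>p1 q1 p2 q2. q1 \<in> blk C k \<and> q2 \<in> blk C k \<and> p1 < d \<and> p2 < d \<and>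
      P $$ (p1, q1) = 1 \<and> P $$ (p2, q2) = 1 \<and> q1 < q2 \<longrightarrow> p1 < p2"
  show "nwc \<sigma>" unfolding nwc_def
  proof (intro ballI allI impI)
    fix k p1 p2 assume k: "k \<in> {1..m}" and p: "p1 < d" "p2 < d" "\<sigma> p1 \<in> blk C k" "\<sigma> p2 \<in> blk C k" "\<sigma> p1 < \<sigma> p2"
    have sd: "\<sigma> p1 < d" "\<sigma> p2 < d" using perm permutes_in_image p(1,2) by fastforce+
    have "P $$ (p1, \<sigma> p1) = 1" "P $$ (p2, \<sigma> p2) = 1" using ent p sd by simp_all
    then show "p1 < p2" using h k p by blast
  qed
next
  assume h: "nwc \<sigma>"
  show "\<forall>k\<in>{1..m}. \<forall>p1 q1 p2 q2. q1 \<in> blk C k \<and> q2 \<in> blk C k \<and> p1 < d \<and> p2 < d \<and>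
      P $$ (p1, q1) = 1 \<and> P $$ (p2, q2) = 1 \<and> q1 < q2 \<longrightarrow> p1 < p2"
  proof (intro ballI allI impI)
    fix k p1 q1 p2 q2 assume k: "k \<in> {1..m}" and a: "q1 \<in> blk C k \<and> q2 \<in> blk C k \<and> p1 < d \<and> p2 < d \<and>
      P $$ (p1, q1) = 1 \<and> P $$ (p2, q2) = 1 \<and> q1 < q2"
    have "C (Suc k) \<le> d" using k C_le_d by simp
    then have qd: "q1 < d" "q2 < d" using a by (auto simp: blk_def)
    have "\<sigma> p1 = q1" "\<sigma> p2 = q2" using a qd ent by (metis zero_neq_one)+
    then show "p1 < p2" using h k a unfolding nwc_def by blast
  qed
qed

end

theorem proposition4p8:
  fixes n :: nat and dx dy :: "nat \<Rightarrow> nat" and r :: "nat \<times> nat \<Rightarrow> nat"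
  assumes "quiver_rank_array TYPE('a::field) n dx dy r"
  shows "\<exists>!P :: 'a mat.
     perm_mat (dX n dx + dY n dy) P \<and>
     (\<forall>i\<in>{1..2*n+1}. \<forall>j\<in>{1..2*n+1}.
        int (ones_in_block n dx dy P i j) =
          int (brank TYPE('a) n dx dy r i j) + int (brank TYPE('a) n dx dy r (i - 1) (j - 1))
          - int (brank TYPE('a) n dx dy r i (j - 1)) - int (brank TYPE('a) n dx dy r (i - 1) j)) \<and>
     nw_se_rows n dx dy P \<and>
     nw_se_cols n dx dy P"
proof -
  define d where "d = dX n dx + dY n dy"
  define m where "m = 2 * n + 1"
  define R where "R = roff n dx dy"
  define C where "C = coff n dx dy"
  interpret B: blocks d m R C using blocks_inst unfolding d_def m_def R_def C_def .
  define V0 where "V0 = (SOME V. V \<in> (orbit_r n dx dy r :: ((nat \<Rightarrow> 'a mat) \<times> (nat \<Rightarrow> 'a mat)) set))"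
  define Z where "Z = zeta n dx dy V0"
  interpret F: fullrank Z d using zeta_inj[of n dx dy V0] unfolding fullrank_def d_def Z_def .
  obtain \<sigma> where \<sigma>: "\<sigma> permutes {..<d}" "\<forall>a\<le>d. \<forall>b\<le>d. fr Z a b = card {p. p < a \<and> \<sigma> p < b}"
    using F.perm_exists by blast
  have Zd: "dim_row Z = d" "dim_col Z = d" using zeta_dims[of n dx dy V0] unfolding Z_def d_def by simp_all
  have br: "\<And>i j. i \<le> m \<Longrightarrow> j \<le> m \<Longrightarrow> brank TYPE('a) n dx dy r i j = fr Z (R (Suc i)) (C (Suc j))"
  proof -
    fix i j assume i: "i \<le> m" and j: "j \<le> m"
    show "brank TYPE('a) n dx dy r i j = fr Z (R (Suc i)) (C (Suc j))"
    proof (cases "i = 0 \<or> j = 0")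
      case True
      then have "brank TYPE('a) n dx dy r i j = 0" unfolding brank_def by auto
      moreover have "fr Z (R (Suc i)) (C (Suc j)) = 0"
        using True B.R1 B.C1 fr_0b[of Z] fr_a0[of Z] by auto
      ultimately show ?thesis by simp
    next
      case False
      then have c: "1 \<le> i \<and> i \<le> 2 * n + 1 \<and> 1 \<le> j \<and> j \<le> 2 * n + 1" using i j m_def by auto
      have "brank TYPE('a) n dx dy r i j = mrank (Zsub n dx dy Z i j)"
        unfolding brank_def Z_def V0_def using c by simp
      also have "\<dots> = mrank (submatrix Z {..<R (Suc i)} {..<C (Suc j)})"
        unfolding Zsub_def R_def C_def by simp
      also have "\<dots> = fr Z (R (Suc i)) (C (Suc j))"
        using mrank_sub[of "R (Suc i)" Z "C (Suc j)"] B.R_le_d[of "Suc i"] B.C_le_d[of "Suc j"] i j Zd by simp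
      finally show ?thesis .
    qed
  qed
  have key: "\<And>i j. i \<in> {1..m} \<Longrightarrow> j \<in> {1..m} \<Longrightarrow> int (B.bc \<sigma> i j) =
      int (brank TYPE('a) n dx dy r i j) + int (brank TYPE('a) n dx dy r (i - 1) (j - 1))
      - int (brank TYPE('a) n dx dy r i (j - 1)) - int (brank TYPE('a) n dx dy r (i - 1) j)"
  proof -
    fix i j assume i: "i \<in> {1..m}" and j: "j \<in> {1..m}"
    have s: "Suc (i - 1) = i" "Suc (j - 1) = j" using i j by auto
    have b1: "brank TYPE('a) n dx dy r i j = card {p. p < R (Suc i) \<and> \<sigma> p < C (Suc j)}"
      using br[of i j] i j \<sigma>(2) B.R_le_d[of "Suc i"] B.C_le_d[of "Suc j"] by simp
    have b2: "brank TYPE('a) n dx dy r (i - 1) (j - 1) = card {p. p < R i \<and> \<sigma> p < C j}"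
      using br[of "i - 1" "j - 1"] i j \<sigma>(2) B.R_le_d[of i] B.C_le_d[of j] s by simp
    have b3: "brank TYPE('a) n dx dy r i (j - 1) = card {p. p < R (Suc i) \<and> \<sigma> p < C j}"
      using br[of i "j - 1"] i j \<sigma>(2) B.R_le_d[of "Suc i"] B.C_le_d[of j] s by simp
    have b4: "brank TYPE('a) n dx dy r (i - 1) j = card {p. p < R i \<and> \<sigma> p < C (Suc j)}"
      using br[of "i - 1" j] i j \<sigma>(2) B.R_le_d[of i] B.C_le_d[of "Suc j"] s by simp
    have "R i \<le> R (Suc i)" "C j \<le> C (Suc j)" using B.monoR B.monoC by (simp_all add: monoD)
    from rect_count[OF this, of \<sigma>]
    show "int (B.bc \<sigma> i j) =
      int (brank TYPE('a) n dx dy r i j) + int (brank TYPE('a) n dx dy r (i - 1) (j - 1))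
      - int (brank TYPE('a) n dx dy r i (j - 1)) - int (brank TYPE('a) n dx dy r (i - 1) j)"
      unfolding b1 b2 b3 b4 B.bc_rect by linarith
  qed
  obtain \<tau> where \<tau>: "\<tau> permutes {..<d}" "B.nwr \<tau>" "B.nwc \<tau>" "\<forall>i\<in>{1..m}. \<forall>j\<in>{1..m}. B.bc \<tau> i j = B.bc \<sigma> i j"
    using B.exist_nwse[OF \<sigma>(1)] by blast
  have conv: "\<And>(Q :: 'a mat) \<rho>. Q \<in> carrier_mat d d \<Longrightarrow> \<rho> permutes {..<d} \<Longrightarrow>
      \<forall>p<d. \<forall>q<d. Q $$ (p, q) = (if \<rho> p = q then 1 else 0) \<Longrightarrow>
      (\<forall>i\<in>{1..m}. \<forall>j\<in>{1..m}. ones_in_block n dx dy Q i j = B.bc \<rho> i j) \<and>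
      (nw_se_rows n dx dy Q \<longleftrightarrow> B.nwr \<rho>) \<and> (nw_se_cols n dx dy Q \<longleftrightarrow> B.nwc \<rho>)"
  proof -
    fix Q :: "'a mat" and \<rho> assume Qc: "Q \<in> carrier_mat d d" and pr: "\<rho> permutes {..<d}"
      and ent: "\<forall>p<d. \<forall>q<d. Q $$ (p, q) = (if \<rho> p = q then 1 else 0)"
    have ones: "\<forall>i\<in>{1..m}. \<forall>j\<in>{1..m}. ones_in_block n dx dy Q i j = B.bc \<rho> i j"
    proof (intro ballI)
      fix i j assume i: "i \<in> {1..m}" and j: "j \<in> {1..m}"
      have "ones_in_block n dx dy Q i j = card {(p, q). p \<in> blk R i \<and> q \<in> blk C j \<and> Q $$ (p, q) = 1}"
        unfolding ones_in_block_def using i j rblock_blk[of i n dx dy] cblock_blk[of j n dx dy]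
        by (simp add: R_def C_def)
      also have "\<dots> = B.bc \<rho> i j" by (rule B.pm_ones[OF Qc ent i j])
      finally show "ones_in_block n dx dy Q i j = B.bc \<rho> i j" .
    qed
    have Qd: "dim_row Q = d" "dim_col Q = d" using Qc by auto
    have rows: "nw_se_rows n dx dy Q \<longleftrightarrow> (\<forall>k\<in>{1..m}. \<forall>p1 q1 p2 q2. p1 \<in> blk R k \<and> p2 \<in> blk R k \<and> q1 < d \<and> q2 < d \<and>
      Q $$ (p1, q1) = 1 \<and> Q $$ (p2, q2) = 1 \<and> p1 < p2 \<longrightarrow> q1 < q2)"
      unfolding nw_se_rows_def Qd m_def[symmetric]
      by (rule ball_cong[OF refl]) (simp add: rblock_blk R_def)
    have cols: "nw_se_cols n dx dy Q \<longleftrightarrow> (\<forall>k\<in>{1..m}. \<forall>p1 q1 p2 q2. q1 \<in> blk C k \<and> q2 \<in> blk C k \<and> p1 < d \<and> p2 < d \<and>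
      Q $$ (p1, q1) = 1 \<and> Q $$ (p2, q2) = 1 \<and> q1 < q2 \<longrightarrow> p1 < p2)"
      unfolding nw_se_cols_def Qd m_def[symmetric]
      by (rule ball_cong[OF refl]) (simp add: cblock_blk C_def)
    show "(\<forall>i\<in>{1..m}. \<forall>j\<in>{1..m}. ones_in_block n dx dy Q i j = B.bc \<rho> i j) \<and>
      (nw_se_rows n dx dy Q \<longleftrightarrow> B.nwr \<rho>) \<and> (nw_se_cols n dx dy Q \<longleftrightarrow> B.nwc \<rho>)"
      using ones rows cols B.pm_rows[OF ent pr] B.pm_cols[OF ent pr] by simp
  qed
  define P :: "'a mat" where "P = mat d d (\<lambda>(p, q). if \<tau> p = q then 1 else 0)"
  have Pc: "P \<in> carrier_mat d d" unfolding P_def by simp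
  have Pent: "\<forall>p<d. \<forall>q<d. P $$ (p, q) = (if \<tau> p = q then 1 else 0)" unfolding P_def by simp
  note cP = conv[OF Pc \<tau>(1) Pent]
  have goal: "\<exists>!P :: 'a mat. perm_mat d P \<and>
     (\<forall>i\<in>{1..m}. \<forall>j\<in>{1..m}.
        int (ones_in_block n dx dy P i j) =
          int (brank TYPE('a) n dx dy r i j) + int (brank TYPE('a) n dx dy r (i - 1) (j - 1))
          - int (brank TYPE('a) n dx dy r i (j - 1)) - int (brank TYPE('a) n dx dy r (i - 1) j)) \<and>
     nw_se_rows n dx dy P \<and> nw_se_cols n dx dy P"
  proof (rule ex1I[of _ P], intro conjI)
    show "perm_mat d P" unfolding perm_mat_def using Pc \<tau>(1) Pent by blast
    show "\<forall>i\<in>{1..m}. \<forall>j\<in>{1..m}.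
        int (ones_in_block n dx dy P i j) =
          int (brank TYPE('a) n dx dy r i j) + int (brank TYPE('a) n dx dy r (i - 1) (j - 1))
          - int (brank TYPE('a) n dx dy r i (j - 1)) - int (brank TYPE('a) n dx dy r (i - 1) j)"
      using cP \<tau>(4) key by simp
    show "nw_se_rows n dx dy P" using cP \<tau>(2) by simp
    show "nw_se_cols n dx dy P" using cP \<tau>(3) by simp
  next
    fix P' :: "'a mat"
    assume h: "perm_mat d P' \<and>
     (\<forall>i\<in>{1..m}. \<forall>j\<in>{1..m}.
        int (ones_in_block n dx dy P' i j) =
          int (brank TYPE('a) n dx dy r i j) + int (brank TYPE('a) n dx dy r (i - 1) (j - 1))
          - int (brank TYPE('a) n dx dy r i (j - 1)) - int (brank TYPE('a) n dx dy r (i - 1) j)) \<and>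
     nw_se_rows n dx dy P' \<and> nw_se_cols n dx dy P'"
    obtain \<rho> where P'c: "P' \<in> carrier_mat d d" and pr: "\<rho> permutes {..<d}"
      and ent: "\<forall>p<d. \<forall>q<d. P' $$ (p, q) = (if \<rho> p = q then 1 else 0)"
      using h unfolding perm_mat_def by blast
    note cQ = conv[OF P'c pr ent]
    have nr: "B.nwr \<rho>" "B.nwc \<rho>" using cQ h by simp_all
    have bceq: "\<forall>i\<in>{1..m}. \<forall>j\<in>{1..m}. B.bc \<rho> i j = B.bc \<tau> i j"
    proof (intro ballI)
      fix i j assume i: "i \<in> {1..m}" and j: "j \<in> {1..m}"
      have "int (B.bc \<rho> i j) = int (B.bc \<sigma> i j)" using cQ h key[OF i j] i j by simp
      then show "B.bc \<rho> i j = B.bc \<tau> i j" using \<tau>(4) i j by simp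
    qed
    have "\<rho> = \<tau>" by (rule B.uniq[OF pr nr \<tau>(1,2,3) bceq])
    show "P' = P"
    proof (rule eq_matI)
      show "dim_row P' = dim_row P" "dim_col P' = dim_col P" using P'c Pc by auto
      fix p q assume "p < dim_row P" "q < dim_col P"
      then have "p < d" "q < d" using Pc by auto
      then show "P' $$ (p, q) = P $$ (p, q)" using ent Pent \<open>\<rho> = \<tau>\<close> by simp
    qed
  qed
  then show ?thesis unfolding d_def m_def .
qed

end
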